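(* Fix $\alpha>1$ and parameters $\varepsilon_0,\delta_0,r,\varepsilon_1,\delta_1,\Delta^{\mathrm{disc}},\Delta>0$, and let $\phi_r$ be the weighted partition selection primitive defined from them. Let $\Delta_0\in\mathbb{N}$ and $\Delta_r\le\Delta$, and call $X,X'\in\mathbb{R}_{\ge0}^U$ neighbors if $\|X-X'\|_0\le\Delta_0$ and $\|X-X'\|_r\le\Delta_r$. Then, provided $\delta := \delta_0\Delta_0+\delta_1\Delta_r^r < 1$, the mechanism $M_{\phi_r}$ (the SNAPS mechanism) is $(\delta,\alpha,\varepsilon)$-RDP with respect to this neighboring relation, where $\varepsilon = \varepsilon_0\Delta_0+\varepsilon_1\Delta_r^r$.
   Context: $\mathrm{Ber}(p)$: Bernoulli distribution. For $\alpha>1$, $D_\alpha(P\|Q)=\frac{1}{\alpha-1}\log\sum_x P(x)^\alpha Q(x)^{1-\alpha}$ and $D^\delta_\alpha(P\|Q)=\inf\{D_\alpha(P'\|Q'): P=(1-\delta)P'+\delta P'',\ Q=(1-\delta)Q'+\delta Q''\}$ over probability distributions. Define $L(q,\varepsilon,\delta) = \max\{p\in[q,1] : D^\delta_\alpha(\mathrm{Ber}(p)\|\mathrm{Ber}(q))\le\varepsilon \text{ and } D^\delta_\alpha(\mathrm{Ber}(q)\|\mathrm{Ber}(p))\le\varepsilon\}$. Let $N_{\mathrm{disc}} = \lceil \Delta/\Delta^{\mathrm{disc}}\rceil$. The discretized primitive $\psi_r:\mathbb{Z}_{\ge0}\to[0,1]$ is $\psi_r(0)=0$ and, for $n>0$,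 $$\psi_r(n) = \min_{i\in\{1,\dots,\min\{n,N_{\mathrm{disc}}\}\}} L\!\left(\psi_r(n-i),\ \varepsilon_0+\varepsilon_1(\Delta^{\mathrm{disc}}(i-1))^r,\ \delta_0+\delta_1(\Delta^{\mathrm{disc}}(i-1))^r\right).$$ The weighted primitive is $\phi_r(y) = \psi_r(\lfloor y/\Delta^{\mathrm{disc}}\rfloor)$ for $y\ge0$. For $X\in\mathbb{R}_{\ge0}^U$, $M_{\phi_r}(X)$ includes each $u\in U$ independently with probability $\phi_r(X_u)$. $\|\cdot\|_0$ counts nonzero coordinates. $(\delta,\alpha,\varepsilon)$-RDP means $D^\delta_\alpha(M(X)\|M(X'))\le\varepsilon$ for all neighbors $X,X'$ in both orders. *)

theory Defs
  imports "HOL-Probability.Probability"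
begin

definition renyi_div :: "real \<Rightarrow> 'a::finite pmf \<Rightarrow> 'a pmf \<Rightarrow> ereal" where
  "renyi_div \<alpha> P Q =
     (if \<exists>x. pmf P x > 0 \<and> pmf Q x = 0 then \<infinity>
      else ereal (ln (\<Sum>x\<in>UNIV. pmf P x powr \<alpha> * pmf Q x powr (1 - \<alpha>)) / (\<alpha> - 1)))"

definition approx_renyi_div :: "real \<Rightarrow> real \<Rightarrow> 'a::finite pmf \<Rightarrow> 'a pmf \<Rightarrow> ereal" where
  "approx_renyi_div \<alpha> \<delta> P Q =
     Inf {renyi_div \<alpha> P' Q' | P' P'' Q' Q''.
            (\<forall>x. pmf P x = (1 - \<delta>) * pmf P' x + \<delta> * pmf P'' x) \<and>
            (\<forall>x. pmf Q x = (1 - \<delta>) * pmf Q' x + \<delta> * pmf Q'' x)}"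

text \<open>L(q, eps, delta) (the maximum, written as a supremum).\<close>
definition L_fun :: "real \<Rightarrow> real \<Rightarrow> real \<Rightarrow> real \<Rightarrow> real" where
  "L_fun \<alpha> q \<epsilon> \<delta> = Sup {p \<in> {q..1}.
      approx_renyi_div \<alpha> \<delta> (bernoulli_pmf p) (bernoulli_pmf q) \<le> ereal \<epsilon> \<and>
      approx_renyi_div \<alpha> \<delta> (bernoulli_pmf q) (bernoulli_pmf p) \<le> ereal \<epsilon>}"

definition N_disc :: "real \<Rightarrow> real \<Rightarrow> nat" where
  "N_disc \<Delta> \<Delta>disc = nat \<lceil>\<Delta> / \<Delta>disc\<rceil>"

function psi :: "real \<Rightarrow> real \<Rightarrow> real \<Rightarrow> real \<Rightarrow> real \<Rightarrow> real \<Rightarrow> real \<Rightarrow> real \<Rightarrow> nat \<Rightarrow> real" where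
  "psi \<alpha> \<epsilon>0 \<delta>0 r \<epsilon>1 \<delta>1 \<Delta>disc \<Delta> n =
     (if n = 0 then 0
      else Min ((\<lambda>i. L_fun \<alpha> (psi \<alpha> \<epsilon>0 \<delta>0 r \<epsilon>1 \<delta>1 \<Delta>disc \<Delta> (n - i))
                     (\<epsilon>0 + \<epsilon>1 * (\<Delta>disc * real (i - 1)) powr r)
                     (\<delta>0 + \<delta>1 * (\<Delta>disc * real (i - 1)) powr r))
                ` {1..min n (N_disc \<Delta> \<Delta>disc)}))"
  by pat_completeness auto
termination
  by (relation "Wellfounded.measure (\<lambda>(\<alpha>, \<epsilon>0, \<delta>0, r, \<epsilon>1, \<delta>1, \<Delta>disc, \<Delta>, n). n)") auto

definition phi :: "real \<Rightarrow> real \<Rightarrow> real \<Rightarrow> real \<Rightarrow> real \<Rightarrow> real \<Rightarrow> real \<Rightarrow> real \<Rightarrow> real \<Rightarrow> real" where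
  "phi \<alpha> \<epsilon>0 \<delta>0 r \<epsilon>1 \<delta>1 \<Delta>disc \<Delta> y =
     psi \<alpha> \<epsilon>0 \<delta>0 r \<epsilon>1 \<delta>1 \<Delta>disc \<Delta> (nat \<lfloor>y / \<Delta>disc\<rfloor>)"

definition mech :: "(real \<Rightarrow> real) \<Rightarrow> ('u::finite \<Rightarrow> real) \<Rightarrow> 'u set pmf" where
  "mech f X = map_pmf (\<lambda>b. {u. b u}) (Pi_pmf UNIV False (\<lambda>u. bernoulli_pmf (f (X u))))"

definition l0_dist :: "('u::finite \<Rightarrow> real) \<Rightarrow> ('u \<Rightarrow> real) \<Rightarrow> nat" where
  "l0_dist X X' = card {u. X u \<noteq> X' u}"

definition lr_dist :: "real \<Rightarrow> ('u::finite \<Rightarrow> real) \<Rightarrow> ('u \<Rightarrow> real) \<Rightarrow> real" where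
  "lr_dist r X X' = (\<Sum>u\<in>UNIV. \<bar>X u - X' u\<bar> powr r) powr (1 / r)"

definition neighbors :: "nat \<Rightarrow> real \<Rightarrow> real \<Rightarrow> ('u::finite \<Rightarrow> real) \<Rightarrow> ('u \<Rightarrow> real) \<Rightarrow> bool" where
  "neighbors \<Delta>0 \<Delta>r r X X' \<longleftrightarrow>
     (\<forall>u. X u \<ge> 0) \<and> (\<forall>u. X' u \<ge> 0) \<and> l0_dist X X' \<le> \<Delta>0 \<and> lr_dist r X X' \<le> \<Delta>r"

definition is_RDP :: "real \<Rightarrow> real \<Rightarrow> real \<Rightarrow> ('x \<Rightarrow> 'x \<Rightarrow> bool) \<Rightarrow> ('x \<Rightarrow> 'o::finite pmf) \<Rightarrow> bool" where
  "is_RDP \<delta> \<alpha> \<epsilon> nb M \<longleftrightarrow>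
     (\<forall>X X'. nb X X' \<longrightarrow>
        approx_renyi_div \<alpha> \<delta> (M X) (M X') \<le> ereal \<epsilon> \<and>
        approx_renyi_div \<alpha> \<delta> (M X') (M X) \<le> ereal \<epsilon>)"

end

theory Submission
  imports Defs
begin

lemma powr_convex_neg:
  fixes p :: real assumes "p \<le> 0" shows "convex_on {0<..} (\<lambda>x. x powr p)"
proof (rule f''_ge0_imp_convex[where f' = "\<lambda>x. p * x powr (p-1)" and f'' = "\<lambda>x. p * ((p-1) * x powr (p-1-1))"])
  show "convex {0::real<..}" by simp
  fix x :: real assume x: "x \<in> {0<..}"
  show "DERIV (\<lambda>x. x powr p) x :> p * x powr (p-1)" using x by (intro has_real_derivative_powr) auto
  show "DERIV (\<lambda>x. p * x powr (p-1)) x :> p * ((p-1) * x powr (p-1-1))"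
    using x by (intro DERIV_cmult has_real_derivative_powr) auto
  show "0 \<le> p * ((p-1) * x powr (p-1-1))" using assms
    by (intro mult_nonpos_nonpos) (auto intro!: mult_nonpos_nonneg)
qed

lemma powr_le_self: "0 \<le> x \<Longrightarrow> x \<le> (1::real) \<Longrightarrow> a \<ge> 1 \<Longrightarrow> x powr a \<le> x"
  by (metis order_le_neq_trans powr_le_one_le powr_nonneg_iff)

lemma cvx1:
  fixes a c l \<alpha> :: real
  assumes "\<alpha> \<ge> 1" "0 \<le> a" "0 \<le> c" "0 \<le> l" "l \<le> 1"
  shows "(l*a + (1-l)*c) powr \<alpha> \<le> l * a powr \<alpha> + (1-l) * c powr \<alpha>"
proof (cases "a > 0 \<and> c > 0")
  case True
  then show ?thesis using convex_onD[OF powr_convex[OF assms(1)], of "1-l" a c] assms by auto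
next
  case False
  then consider "a = 0" | "c = 0" using assms by linarith
  then show ?thesis
  proof cases
    case 1
    have "((1-l)*c) powr \<alpha> = (1-l) powr \<alpha> * c powr \<alpha>" using assms by (simp add: powr_mult)
    also have "\<dots> \<le> (1-l) * c powr \<alpha>"
      by (rule mult_right_mono) (use assms powr_le_self in auto)
    finally show ?thesis using 1 assms by simp
  next
    case 2
    have "(l*a) powr \<alpha> = l powr \<alpha> * a powr \<alpha>" using assms by (simp add: powr_mult)
    also have "\<dots> \<le> l * a powr \<alpha>"
      by (rule mult_right_mono) (use assms powr_le_self in auto)
    finally show ?thesis using 2 assms by simp
  qed
qed

lemma cvx2:
  fixes a c l \<beta> :: real
  assumes "\<beta> \<le> 0" "0 < a" "0 < c" "0 \<le> l" "l \<le> 1"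
  shows "(l*a + (1-l)*c) powr \<beta> \<le> l * a powr \<beta> + (1-l) * c powr \<beta>"
  using convex_onD[OF powr_convex_neg[OF assms(1)], of "1-l" a c] assms by auto

definition tt :: "real \<Rightarrow> real \<Rightarrow> real \<Rightarrow> real" where
  "tt \<alpha> a c = a powr \<alpha> * c powr (1-\<alpha>)"

lemma tt_diag: "0 \<le> c \<Longrightarrow> tt \<alpha> c c = c"
  by (cases "c = 0") (auto simp: tt_def powr_add[symmetric])

lemma tt_nonneg: "tt \<alpha> a c \<ge> 0"
  by (simp add: tt_def)

lemma T1:
  assumes "\<alpha> \<ge> 1" "0 \<le> a" "0 \<le> c" "0 \<le> l" "l \<le> 1"
  shows "tt \<alpha> (l*a + (1-l)*c) c \<le> l * tt \<alpha> a c + (1-l) * c"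
proof -
  have "tt \<alpha> (l*a + (1-l)*c) c \<le> (l * a powr \<alpha> + (1-l) * c powr \<alpha>) * c powr (1-\<alpha>)"
    unfolding tt_def by (rule mult_right_mono[OF cvx1]) (use assms in auto)
  also have "\<dots> = l * tt \<alpha> a c + (1-l) * tt \<alpha> c c" by (simp add: tt_def algebra_simps)
  finally show ?thesis using tt_diag assms by simp
qed

lemma T2:
  assumes "\<alpha> \<ge> 1" "0 \<le> a" "0 \<le> c" "0 \<le> l" "l \<le> 1" "a > 0 \<longrightarrow> c > 0"
  shows "tt \<alpha> a (l*c + (1-l)*a) \<le> l * tt \<alpha> a c + (1-l) * a"
proof (cases "a = 0")
  case True then show ?thesis by (simp add: tt_def)
next
  case False
  hence "a > 0" "c > 0" using assms by auto
  have "tt \<alpha> a (l*c + (1-l)*a) \<le> a powr \<alpha> * (l * c powr (1-\<alpha>) + (1-l) * a powr (1-\<alpha>))"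
    unfolding tt_def by (rule mult_left_mono[OF cvx2]) (use assms \<open>a>0\<close> \<open>c>0\<close> in auto)
  also have "\<dots> = l * tt \<alpha> a c + (1-l) * tt \<alpha> a a" by (simp add: tt_def algebra_simps)
  finally show ?thesis using tt_diag assms by simp
qed

definition FF :: "real \<Rightarrow> real \<Rightarrow> real \<Rightarrow> real" where
  "FF \<alpha> a c = tt \<alpha> a c + tt \<alpha> (1-a) (1-c)"

definition Bc :: "real \<Rightarrow> real \<Rightarrow> real \<Rightarrow> real \<Rightarrow> bool" where
  "Bc \<alpha> E a c \<longleftrightarrow> (0 < a \<longrightarrow> 0 < c) \<and> (a < 1 \<longrightarrow> c < 1) \<and> FF \<alpha> a c \<le> E"

lemma M1:
  assumes "\<alpha> \<ge> 1" "E \<ge> 1" "Bc \<alpha> E a c" "0 \<le> a" "a \<le> 1" "0 \<le> c" "c \<le> 1" "0 \<le> l" "l \<le> 1"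
  shows "Bc \<alpha> E (l*a + (1-l)*c) c"
proof -
  have e: "1 - (l*a + (1-l)*c) = l*(1-a) + (1-l)*(1-c)" by (simp add: algebra_simps)
  have "FF \<alpha> (l*a + (1-l)*c) c \<le> (l * tt \<alpha> a c + (1-l) * c) + (l * tt \<alpha> (1-a) (1-c) + (1-l) * (1-c))"
    unfolding FF_def e
    by (rule add_mono[OF T1 T1]) (use assms in simp_all)
  also have "\<dots> = l * FF \<alpha> a c + (1-l)" by (simp add: FF_def algebra_simps)
  also have "\<dots> \<le> l * E + (1-l) * E"
    using assms mult_left_mono[of "FF \<alpha> a c" E l] mult_left_mono[of 1 E "1-l"]
    by (auto simp: Bc_def)
  finally have "FF \<alpha> (l*a + (1-l)*c) c \<le> E" by (simp add: algebra_simps)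
  moreover have "0 < l*a + (1-l)*c \<longrightarrow> 0 < c"
  proof
    assume "0 < l*a + (1-l)*c"
    hence "a > 0 \<or> c > 0" using assms by (cases "a = 0"; cases "c = 0") auto
    thus "c > 0" using assms by (auto simp: Bc_def)
  qed
  moreover have "l*a + (1-l)*c < 1 \<longrightarrow> c < 1"
  proof
    assume "l*a + (1-l)*c < 1"
    hence "0 < l*(1-a) + (1-l)*(1-c)" using e by linarith
    hence "a < 1 \<or> c < 1" using assms by (cases "a = 1"; cases "c = 1") auto
    thus "c < 1" using assms by (auto simp: Bc_def)
  qed
  ultimately show ?thesis by (simp add: Bc_def)
qed

lemma M2:
  assumes "\<alpha> \<ge> 1" "E \<ge> 1" "Bc \<alpha> E a c" "0 \<le> a" "a \<le> 1" "0 \<le> c" "c \<le> 1" "0 \<le> l" "l \<le> 1"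
  shows "Bc \<alpha> E a (l*c + (1-l)*a)"
proof -
  have e: "1 - (l*c + (1-l)*a) = l*(1-c) + (1-l)*(1-a)" by (simp add: algebra_simps)
  have "FF \<alpha> a (l*c + (1-l)*a) \<le> (l * tt \<alpha> a c + (1-l) * a) + (l * tt \<alpha> (1-a) (1-c) + (1-l) * (1-a))"
    unfolding FF_def e
    by (rule add_mono[OF T2 T2]) (use assms in \<open>simp_all add: Bc_def\<close>)
  also have "\<dots> = l * FF \<alpha> a c + (1-l)" by (simp add: FF_def algebra_simps)
  also have "\<dots> \<le> l * E + (1-l) * E"
    using assms mult_left_mono[of "FF \<alpha> a c" E l] mult_left_mono[of 1 E "1-l"]
    by (auto simp: Bc_def)
  finally have "FF \<alpha> a (l*c + (1-l)*a) \<le> E" by (simp add: algebra_simps)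
  moreover have "0 < a \<longrightarrow> 0 < l*c + (1-l)*a"
  proof
    assume "0 < a" hence "0 < c" using assms by (auto simp: Bc_def)
    thus "0 < l*c + (1-l)*a" using assms \<open>0<a\<close>
      by (smt (verit) mult_nonneg_nonneg mult_pos_pos)
  qed
  moreover have "a < 1 \<longrightarrow> l*c + (1-l)*a < 1"
  proof
    assume "a < 1" hence "c < 1" using assms by (auto simp: Bc_def)
    hence "0 < l*(1-c) + (1-l)*(1-a)" using assms \<open>a<1\<close>
      by (smt (verit) mult_nonneg_nonneg mult_pos_pos)
    thus "l*c + (1-l)*a < 1" using e by linarith
  qed
  ultimately show ?thesis by (simp add: Bc_def)
qed

lemma sum_pmf_UNIV: "(\<Sum>x\<in>(UNIV::'a::finite set). pmf P x) = 1"
  by (rule sum_pmf_eq_1) auto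

lemma decomp_exists:
  fixes P P' :: "'a::finite pmf"
  assumes "\<delta> \<ge> 0" "\<forall>x. (1-\<delta>) * pmf P' x \<le> pmf P x"
  shows "\<exists>P''. \<forall>x. pmf P x = (1-\<delta>) * pmf P' x + \<delta> * pmf P'' x"
proof (cases "\<delta> = 0")
  case True
  have "(\<Sum>x\<in>UNIV. pmf P x - pmf P' x) = 0"
    by (simp add: sum_subtractf sum_pmf_UNIV)
  moreover have "\<forall>x\<in>UNIV. 0 \<le> pmf P x - pmf P' x" using assms True by auto
  ultimately have "\<forall>x\<in>UNIV. pmf P x - pmf P' x = 0"
    using sum_nonneg_eq_0_iff[of UNIV "\<lambda>x. pmf P x - pmf P' x"] by auto
  then show ?thesis using True by auto
next
  case False
  hence d: "\<delta> > 0" using assms by auto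
  define f where "f x = (pmf P x - (1-\<delta>) * pmf P' x) / \<delta>" for x
  have nn: "\<And>x. 0 \<le> f x" unfolding f_def using assms d by auto
  have "(\<Sum>x\<in>UNIV. f x) = ((\<Sum>x\<in>UNIV. pmf P x) - (1-\<delta>) * (\<Sum>x\<in>UNIV. pmf P' x)) / \<delta>"
    unfolding f_def by (simp add: sum_divide_distrib[symmetric] sum_subtractf sum_distrib_left)
  also have "\<dots> = 1" using d by (simp add: sum_pmf_UNIV)
  finally have s: "(\<Sum>x\<in>UNIV. f x) = 1" .
  have pr: "(\<integral>\<^sup>+x. f x \<partial>count_space UNIV) = 1"
    by (subst nn_integral_count_space_finite) (auto simp: nn s)
  show ?thesis
    by (rule exI[of _ "embed_pmf f"]) (use d in \<open>simp add: pmf_embed_pmf[OF nn pr] f_def\<close>)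
qed

lemma approx_le:
  fixes P P' Q Q' :: "'a::finite pmf"
  assumes "\<delta> \<ge> 0" "\<forall>x. (1-\<delta>) * pmf P' x \<le> pmf P x" "\<forall>x. (1-\<delta>) * pmf Q' x \<le> pmf Q x"
  shows "approx_renyi_div \<alpha> \<delta> P Q \<le> renyi_div \<alpha> P' Q'"
proof -
  obtain P'' where 1: "\<forall>x. pmf P x = (1-\<delta>) * pmf P' x + \<delta> * pmf P'' x"
    using decomp_exists[OF assms(1,2)] by blast
  obtain Q'' where 2: "\<forall>x. pmf Q x = (1-\<delta>) * pmf Q' x + \<delta> * pmf Q'' x"
    using decomp_exists[OF assms(1,3)] by blast
  show ?thesis unfolding approx_renyi_div_def
    by (rule Inf_lower) (use 1 2 in blast)
qed

lemma approx_lt: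
  fixes P Q :: "'a::finite pmf"
  assumes "approx_renyi_div \<alpha> \<delta> P Q < y"
  shows "\<exists>P' P'' Q' Q''. (\<forall>x. pmf P x = (1-\<delta>) * pmf P' x + \<delta> * pmf P'' x) \<and>
     (\<forall>x. pmf Q x = (1-\<delta>) * pmf Q' x + \<delta> * pmf Q'' x) \<and> renyi_div \<alpha> P' Q' < y"
  using assms unfolding approx_renyi_div_def Inf_less_iff by blast

lemma renyi_self: "renyi_div \<alpha> P P = 0"
proof -
  have "(\<Sum>x\<in>UNIV. pmf P x powr \<alpha> * pmf P x powr (1 - \<alpha>)) = (\<Sum>x\<in>UNIV. pmf P x)"
    by (rule sum.cong) (auto simp: powr_add[symmetric] simp del: powr_add)
  then show ?thesis by (auto simp: renyi_div_def sum_pmf_UNIV)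
qed

lemma renyi_bool:
  fixes P Q :: "bool pmf"
  assumes "\<alpha> > 1"
  shows "renyi_div \<alpha> P Q \<le> ereal \<epsilon> \<longleftrightarrow> Bc \<alpha> (exp ((\<alpha>-1)*\<epsilon>)) (pmf P True) (pmf Q True)"
proof -
  define a c where "a = pmf P True" and "c = pmf Q True"
  have a: "0 \<le> a" "a \<le> 1" and c: "0 \<le> c" "c \<le> 1" unfolding a_def c_def by (auto simp: pmf_le_1)
  have ex: "(\<exists>x. pmf P x > 0 \<and> pmf Q x = 0) \<longleftrightarrow> \<not> ((0 < a \<longrightarrow> 0 < c) \<and> (a < 1 \<longrightarrow> c < 1))"
  proof -
    have "(\<exists>x. pmf P x > 0 \<and> pmf Q x = 0) \<longleftrightarrow> (a > 0 \<and> c = 0) \<or> (1 - a > 0 \<and> 1 - c = 0)"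
      unfolding a_def c_def by (metis (full_types) pmf_False_conv_True)
    thus ?thesis using a c by auto
  qed
  have sum: "(\<Sum>x\<in>UNIV. pmf P x powr \<alpha> * pmf Q x powr (1 - \<alpha>)) = FF \<alpha> a c"
    unfolding FF_def tt_def a_def c_def UNIV_bool by (simp add: pmf_False_conv_True)
  show ?thesis
  proof (cases "(0 < a \<longrightarrow> 0 < c) \<and> (a < 1 \<longrightarrow> c < 1)")
    case False
    then show ?thesis using ex by (auto simp: renyi_div_def Bc_def a_def c_def)
  next
    case True
    have pos: "FF \<alpha> a c > 0"
    proof (cases "a > 0")
      case True
      hence "c > 0" using \<open>(0 < a \<longrightarrow> 0 < c) \<and> _\<close> by auto
      hence "tt \<alpha> a c > 0" using True by (simp add: tt_def)
      thus ?thesis unfolding FF_def using tt_nonneg[of \<alpha> "1-a" "1-c"] by linarith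
    next
      case False
      hence "a = 0" using a by auto
      hence "c < 1" using \<open>_ \<and> (a < 1 \<longrightarrow> c < 1)\<close> by auto
      hence "tt \<alpha> (1-a) (1-c) > 0" using \<open>a = 0\<close> by (simp add: tt_def)
      thus ?thesis unfolding FF_def using tt_nonneg[of \<alpha> a c] by linarith
    qed
    have "renyi_div \<alpha> P Q = ereal (ln (FF \<alpha> a c) / (\<alpha> - 1))"
      using ex True sum by (simp add: renyi_div_def)
    moreover have "ln (FF \<alpha> a c) / (\<alpha> - 1) \<le> \<epsilon> \<longleftrightarrow> ln (FF \<alpha> a c) \<le> (\<alpha>-1)*\<epsilon>"
      using assms by (simp add: divide_le_eq mult.commute)
    moreover have "ln (FF \<alpha> a c) \<le> (\<alpha>-1)*\<epsilon> \<longleftrightarrow> FF \<alpha> a c \<le> exp ((\<alpha>-1)*\<epsilon>)"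
      using pos by (metis exp_le_cancel_iff exp_ln ln_exp)
    ultimately show ?thesis using True by (simp add: Bc_def a_def c_def)
  qed
qed

definition lo :: "real \<Rightarrow> real \<Rightarrow> real" where "lo \<delta> p = max 0 ((p - \<delta>) / (1 - \<delta>))"
definition hi :: "real \<Rightarrow> real \<Rightarrow> real" where "hi \<delta> q = min 1 (q / (1 - \<delta>))"
definition feas :: "real \<Rightarrow> real \<Rightarrow> real \<Rightarrow> bool" where
  "feas \<delta> p a \<longleftrightarrow> 0 \<le> a \<and> a \<le> 1 \<and> (1-\<delta>)*a \<le> p \<and> (1-\<delta>)*(1-a) \<le> 1-p"
definition CC :: "real \<Rightarrow> real \<Rightarrow> real \<Rightarrow> real \<Rightarrow> real \<Rightarrow> bool" where
  "CC \<alpha> E \<delta> p q \<longleftrightarrow> lo \<delta> p \<le> hi \<delta> q \<or> (Bc \<alpha> E (lo \<delta> p) (hi \<delta> q) \<and> Bc \<alpha> E (hi \<delta> q) (lo \<delta> p))"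

lemma lo_le_hi: "0 < \<delta> \<Longrightarrow> \<delta> < 1 \<Longrightarrow> 0 \<le> p \<Longrightarrow> p \<le> 1 \<Longrightarrow> lo \<delta> p \<le> hi \<delta> p"
  unfolding lo_def hi_def by (auto simp: divide_le_eq field_simps)

lemma lo_range: "0 < \<delta> \<Longrightarrow> \<delta> < 1 \<Longrightarrow> p \<le> 1 \<Longrightarrow> 0 \<le> lo \<delta> p \<and> lo \<delta> p \<le> 1"
  unfolding lo_def by (auto simp: divide_le_eq)

lemma hi_range: "0 < \<delta> \<Longrightarrow> \<delta> < 1 \<Longrightarrow> 0 \<le> q \<Longrightarrow> 0 \<le> hi \<delta> q \<and> hi \<delta> q \<le> 1"
  unfolding hi_def by auto

lemma lo_mono: "\<delta> < 1 \<Longrightarrow> p \<le> p' \<Longrightarrow> lo \<delta> p \<le> lo \<delta> p'"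
  unfolding lo_def by (intro max.mono divide_right_mono) auto

lemma hi_mono: "\<delta> < 1 \<Longrightarrow> q \<le> q' \<Longrightarrow> hi \<delta> q \<le> hi \<delta> q'"
  unfolding hi_def by (intro min.mono divide_right_mono) auto

lemma feas_bounds: "0 < \<delta> \<Longrightarrow> \<delta> < 1 \<Longrightarrow> feas \<delta> p a \<Longrightarrow> lo \<delta> p \<le> a \<and> a \<le> hi \<delta> p"
  unfolding feas_def lo_def hi_def
  by (auto simp: pos_divide_le_eq pos_le_divide_eq algebra_simps)

lemma feas_between: "0 < \<delta> \<Longrightarrow> \<delta> < 1 \<Longrightarrow> lo \<delta> p \<le> a \<Longrightarrow> a \<le> hi \<delta> p \<Longrightarrow> feas \<delta> p a"
  unfolding feas_def lo_def hi_def
  by (auto simp: pos_divide_le_eq pos_le_divide_eq algebra_simps)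

lemma feas_lo: "0 < \<delta> \<Longrightarrow> \<delta> < 1 \<Longrightarrow> 0 \<le> p \<Longrightarrow> p \<le> 1 \<Longrightarrow> feas \<delta> p (lo \<delta> p)"
  by (rule feas_between) (simp_all add: lo_le_hi)

lemma feas_hi: "0 < \<delta> \<Longrightarrow> \<delta> < 1 \<Longrightarrow> 0 \<le> p \<Longrightarrow> p \<le> 1 \<Longrightarrow> feas \<delta> p (hi \<delta> p)"
  by (rule feas_between) (simp_all add: lo_le_hi)

lemma feas_pmf:
  assumes "0 \<le> p" "p \<le> 1" "feas \<delta> p a"
  shows "\<forall>x. (1-\<delta>) * pmf (bernoulli_pmf a) x \<le> pmf (bernoulli_pmf p) x"
proof
  fix x show "(1-\<delta>) * pmf (bernoulli_pmf a) x \<le> pmf (bernoulli_pmf p) x"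
    using assms unfolding feas_def by (cases x) simp_all
qed

lemma pmf_feas:
  fixes P' P'' :: "bool pmf"
  assumes "0 \<le> p" "p \<le> 1" "0 \<le> \<delta>" "\<forall>x. pmf (bernoulli_pmf p) x = (1-\<delta>) * pmf P' x + \<delta> * pmf P'' x"
  shows "feas \<delta> p (pmf P' True)"
proof -
  have 1: "p = (1-\<delta>) * pmf P' True + \<delta> * pmf P'' True"
    using assms(4)[rule_format, of True] pmf_bernoulli_True[OF assms(1,2)] by simp
  have 2: "1 - p = (1-\<delta>) * (1 - pmf P' True) + \<delta> * (1 - pmf P'' True)"
    using assms(4)[rule_format, of False] pmf_bernoulli_False[OF assms(1,2)] by (simp add: pmf_False_conv_True)
  have "\<delta> * pmf P'' True \<ge> 0" "\<delta> * (1 - pmf P'' True) \<ge> 0" using assms(3) by (auto simp: pmf_le_1)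
  then show ?thesis unfolding feas_def using 1 2 by (auto simp: pmf_le_1)
qed

lemma Bc_refl: "0 \<le> z \<Longrightarrow> z \<le> 1 \<Longrightarrow> 1 \<le> E \<Longrightarrow> Bc \<alpha> E z z"
proof -
  assume a: "0 \<le> z" "z \<le> 1" "1 \<le> E"
  have "FF \<alpha> z z = 1" unfolding FF_def using tt_diag[of z \<alpha>] tt_diag[of "1-z" \<alpha>] a by simp
  thus ?thesis unfolding Bc_def using a by simp
qed

lemma frac01: "(x::real) \<le> y \<Longrightarrow> y \<le> z \<Longrightarrow> x < z \<Longrightarrow> 0 \<le> (y - x) / (z - x) \<and> (y - x) / (z - x) \<le> 1"
  by (auto simp: divide_le_eq_1)

lemma M1b:
  assumes "\<alpha> \<ge> 1" "E \<ge> 1" "Bc \<alpha> E a c" "0 \<le> a" "a \<le> 1" "0 \<le> c" "c \<le> 1" "min a c \<le> z" "z \<le> max a c"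
  shows "Bc \<alpha> E z c"
proof (cases "a = c")
  case True
  hence "z = a" using assms(8,9) by simp
  then show ?thesis using assms(3) True by simp
next
  case False
  define l where "l = (z - c) / (a - c)"
  have "l*(a-c) = z - c" using False by (simp add: l_def)
  hence z: "z = l*a + (1-l)*c" by (simp add: algebra_simps)
  have "0 \<le> l \<and> l \<le> 1"
  proof (cases "a < c")
    case True
    have "l = (c - z) / (c - a)" unfolding l_def by (metis minus_diff_eq minus_divide_divide)
    thus ?thesis using True assms(8,9) frac01[of a z c] by (simp add: min_def max_def)
  next
    case F: False
    hence "c < a" using False by simp
    thus ?thesis using assms(8,9) frac01[of c z a] unfolding l_def by (simp add: min_def max_def)
  qed
  then show ?thesis unfolding z using M1 assms by blast
qed

lemma M2b:
  assumes "\<alpha> \<ge> 1" "E \<ge> 1" "Bc \<alpha> E a c" "0 \<le> a" "a \<le> 1" "0 \<le> c" "c \<le> 1" "min a c \<le> w" "w \<le> max a c"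
  shows "Bc \<alpha> E a w"
proof (cases "a = c")
  case True
  hence "w = c" using assms(8,9) by simp
  then show ?thesis using assms(3) True by simp
next
  case False
  define l where "l = (w - a) / (c - a)"
  have "l*(c-a) = w - a" using False by (simp add: l_def)
  hence w: "w = l*c + (1-l)*a" by (simp add: algebra_simps)
  have "0 \<le> l \<and> l \<le> 1"
  proof (cases "c < a")
    case True
    have "l = (a - w) / (a - c)" unfolding l_def by (metis minus_diff_eq minus_divide_divide)
    thus ?thesis using True assms(8,9) frac01[of c w a] by (simp add: min_def max_def)
  next
    case F: False
    hence "a < c" using False by simp
    thus ?thesis using assms(8,9) frac01[of a w c] unfolding l_def by (simp add: min_def max_def)
  qed
  then show ?thesis unfolding w using M2 assms by blast
qed

lemma exp_eps:
  fixes k F \<epsilon> :: real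
  assumes "k > 0" "\<forall>\<eta>>0. F \<le> exp (k*(\<epsilon>+\<eta>))"
  shows "F \<le> exp (k*\<epsilon>)"
proof (rule ccontr)
  assume "\<not> F \<le> exp (k*\<epsilon>)"
  hence F: "F > exp (k*\<epsilon>)" by simp
  hence Fp: "F > 0" using exp_gt_zero less_trans by blast
  have "ln F > k*\<epsilon>" using F Fp by (metis exp_less_cancel_iff exp_ln)
  define \<eta> where "\<eta> = (ln F - k*\<epsilon>) / (2*k)"
  have "\<eta> > 0" using \<open>ln F > k*\<epsilon>\<close> assms(1) by (simp add: \<eta>_def)
  have "k*(\<epsilon>+\<eta>) = k*\<epsilon> + (ln F - k*\<epsilon>)/2" using assms(1) by (simp add: \<eta>_def field_simps)
  also have "\<dots> < ln F" using \<open>ln F > k*\<epsilon>\<close> by (simp add: field_simps)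
  finally have "exp (k*(\<epsilon>+\<eta>)) < F" using Fp by (metis exp_less_cancel_iff exp_ln)
  thus False using assms(2) \<open>\<eta> > 0\<close> by fastforce
qed

lemma Bc_lim:
  assumes "\<alpha> > 1" "\<forall>\<eta>>0. Bc \<alpha> (exp ((\<alpha>-1)*(\<epsilon>+\<eta>))) a c"
  shows "Bc \<alpha> (exp ((\<alpha>-1)*\<epsilon>)) a c"
proof -
  have "Bc \<alpha> (exp ((\<alpha>-1)*(\<epsilon>+1))) a c" using assms(2) by simp
  moreover have "FF \<alpha> a c \<le> exp ((\<alpha>-1)*\<epsilon>)"
    by (rule exp_eps) (use assms in \<open>auto simp: Bc_def\<close>)
  ultimately show ?thesis by (simp add: Bc_def)
qed

lemma E_ge1: "(\<alpha>::real) > 1 \<Longrightarrow> \<epsilon> \<ge> 0 \<Longrightarrow> exp ((\<alpha>-1)*\<epsilon>) \<ge> 1"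
proof -
  assume "\<alpha> > 1" "\<epsilon> \<ge> 0"
  hence "0 \<le> (\<alpha>-1)*\<epsilon>" by (intro mult_nonneg_nonneg) auto
  thus ?thesis by (simp add: one_le_exp_iff)
qed

lemma CC_wit:
  assumes "\<alpha> > 1" "E \<ge> 1" "0 < \<delta>" "\<delta> < 1" "0 \<le> q" "q \<le> p" "p \<le> 1" "CC \<alpha> E \<delta> p q"
  shows "\<exists>a c. feas \<delta> p a \<and> feas \<delta> q c \<and> Bc \<alpha> E a c"
    and "\<exists>a c. feas \<delta> q a \<and> feas \<delta> p c \<and> Bc \<alpha> E a c"
proof -
  have lp: "0 \<le> lo \<delta> p" "lo \<delta> p \<le> 1" using lo_range assms by auto
  have hq: "0 \<le> hi \<delta> q" "hi \<delta> q \<le> 1" using hi_range assms by auto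
  have fp: "feas \<delta> p (lo \<delta> p)" using feas_lo assms by auto
  have fq: "feas \<delta> q (hi \<delta> q)" using feas_hi assms by auto
  have "(\<exists>a c. feas \<delta> p a \<and> feas \<delta> q c \<and> Bc \<alpha> E a c) \<and> (\<exists>a c. feas \<delta> q a \<and> feas \<delta> p c \<and> Bc \<alpha> E a c)"
  proof (cases "lo \<delta> p \<le> hi \<delta> q")
    case True
    have "lo \<delta> q \<le> lo \<delta> p" using lo_mono assms by auto
    hence fq': "feas \<delta> q (lo \<delta> p)" using feas_between assms True by auto
    have "Bc \<alpha> E (lo \<delta> p) (lo \<delta> p)" using Bc_refl lp assms by auto
    then show ?thesis using fp fq' by blast
  next
    case False
    hence "Bc \<alpha> E (lo \<delta> p) (hi \<delta> q) \<and> Bc \<alpha> E (hi \<delta> q) (lo \<delta> p)" using assms(8) by (simp add: CC_def)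
    then show ?thesis using fp fq by blast
  qed
  thus "\<exists>a c. feas \<delta> p a \<and> feas \<delta> q c \<and> Bc \<alpha> E a c"
    and "\<exists>a c. feas \<delta> q a \<and> feas \<delta> p c \<and> Bc \<alpha> E a c" by blast+
qed

lemma CC_to_S:
  assumes "\<alpha> > 1" "\<epsilon> \<ge> 0" "0 < \<delta>" "\<delta> < 1" "0 \<le> q" "q \<le> p" "p \<le> 1"
    "CC \<alpha> (exp ((\<alpha>-1)*\<epsilon>)) \<delta> p q"
  shows "approx_renyi_div \<alpha> \<delta> (bernoulli_pmf p) (bernoulli_pmf q) \<le> ereal \<epsilon>"
    and "approx_renyi_div \<alpha> \<delta> (bernoulli_pmf q) (bernoulli_pmf p) \<le> ereal \<epsilon>"
proof -
  have E: "exp ((\<alpha>-1)*\<epsilon>) \<ge> 1" using assms E_ge1 by simp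
  obtain a c where ac: "feas \<delta> p a" "feas \<delta> q c" "Bc \<alpha> (exp ((\<alpha>-1)*\<epsilon>)) a c"
    using CC_wit(1)[OF assms(1) E assms(3-8)] by blast
  have "renyi_div \<alpha> (bernoulli_pmf a) (bernoulli_pmf c) \<le> ereal \<epsilon>"
    using ac renyi_bool[OF assms(1)] by (simp add: feas_def)
  moreover have "approx_renyi_div \<alpha> \<delta> (bernoulli_pmf p) (bernoulli_pmf q) \<le> renyi_div \<alpha> (bernoulli_pmf a) (bernoulli_pmf c)"
    by (rule approx_le) (use assms ac feas_pmf in auto)
  ultimately show "approx_renyi_div \<alpha> \<delta> (bernoulli_pmf p) (bernoulli_pmf q) \<le> ereal \<epsilon>" by simp
  obtain a c where ac: "feas \<delta> q a" "feas \<delta> p c" "Bc \<alpha> (exp ((\<alpha>-1)*\<epsilon>)) a c"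
    using CC_wit(2)[OF assms(1) E assms(3-8)] by blast
  have "renyi_div \<alpha> (bernoulli_pmf a) (bernoulli_pmf c) \<le> ereal \<epsilon>"
    using ac renyi_bool[OF assms(1)] by (simp add: feas_def)
  moreover have "approx_renyi_div \<alpha> \<delta> (bernoulli_pmf q) (bernoulli_pmf p) \<le> renyi_div \<alpha> (bernoulli_pmf a) (bernoulli_pmf c)"
    by (rule approx_le) (use assms ac feas_pmf in auto)
  ultimately show "approx_renyi_div \<alpha> \<delta> (bernoulli_pmf q) (bernoulli_pmf p) \<le> ereal \<epsilon>" by simp
qed

lemma approx_obtain_Bc:
  assumes "\<alpha> > 1" "0 < \<delta>" "\<delta> < 1" "0 \<le> p" "p \<le> 1" "0 \<le> q" "q \<le> 1" "\<eta> > 0"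
    "approx_renyi_div \<alpha> \<delta> (bernoulli_pmf p) (bernoulli_pmf q) \<le> ereal \<epsilon>"
  shows "\<exists>a c. feas \<delta> p a \<and> feas \<delta> q c \<and> Bc \<alpha> (exp ((\<alpha>-1)*(\<epsilon>+\<eta>))) a c"
proof -
  have "approx_renyi_div \<alpha> \<delta> (bernoulli_pmf p) (bernoulli_pmf q) < ereal (\<epsilon>+\<eta>)"
  proof -
    have "ereal \<epsilon> < ereal (\<epsilon>+\<eta>)" using assms(8) by simp
    thus ?thesis using assms(9) by (rule order.strict_trans1[rotated])
  qed
  then obtain P' P'' Q' Q'' where
    d1: "\<forall>x. pmf (bernoulli_pmf p) x = (1-\<delta>) * pmf P' x + \<delta> * pmf P'' x" and
    d2: "\<forall>x. pmf (bernoulli_pmf q) x = (1-\<delta>) * pmf Q' x + \<delta> * pmf Q'' x" and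
    r: "renyi_div \<alpha> P' Q' < ereal (\<epsilon>+\<eta>)"
    using approx_lt by blast
  have "Bc \<alpha> (exp ((\<alpha>-1)*(\<epsilon>+\<eta>))) (pmf P' True) (pmf Q' True)"
    using renyi_bool[OF assms(1)] r by (meson less_imp_le)
  moreover have "feas \<delta> p (pmf P' True)" using pmf_feas[OF assms(4,5) _ d1] assms(2) by simp
  moreover have "feas \<delta> q (pmf Q' True)" using pmf_feas[OF assms(6,7) _ d2] assms(2) by simp
  ultimately show ?thesis by blast
qed

lemma S_to_CC:
  assumes "\<alpha> > 1" "\<epsilon> \<ge> 0" "0 < \<delta>" "\<delta> < 1" "0 \<le> q" "q \<le> p" "p \<le> 1"
    "approx_renyi_div \<alpha> \<delta> (bernoulli_pmf p) (bernoulli_pmf q) \<le> ereal \<epsilon>"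
    "approx_renyi_div \<alpha> \<delta> (bernoulli_pmf q) (bernoulli_pmf p) \<le> ereal \<epsilon>"
  shows "CC \<alpha> (exp ((\<alpha>-1)*\<epsilon>)) \<delta> p q"
proof (cases "lo \<delta> p \<le> hi \<delta> q")
  case True then show ?thesis by (simp add: CC_def)
next
  case False
  define x y where "x = lo \<delta> p" and "y = hi \<delta> q"
  have xy: "y < x" using False by (simp add: x_def y_def)
  have x01: "0 \<le> x" "x \<le> 1" using lo_range assms unfolding x_def by auto
  have y01: "0 \<le> y" "y \<le> 1" using hi_range assms unfolding y_def by auto
  have a1: "\<alpha> \<ge> 1" using assms by simp
  have 1: "Bc \<alpha> (exp ((\<alpha>-1)*(\<epsilon>+\<eta>))) x y" if eta: "\<eta> > 0" for \<eta>
  proof -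
    have Eg: "exp ((\<alpha>-1)*(\<epsilon>+\<eta>)) \<ge> 1" using assms eta E_ge1[of \<alpha> "\<epsilon>+\<eta>"] by simp
    obtain a c where ac: "feas \<delta> p a" "feas \<delta> q c" "Bc \<alpha> (exp ((\<alpha>-1)*(\<epsilon>+\<eta>))) a c"
      using approx_obtain_Bc[of \<alpha> \<delta> p q \<eta> \<epsilon>] assms eta by auto
    have "x \<le> a" using feas_bounds[OF assms(3,4) ac(1)] x_def by simp
    have "c \<le> y" using feas_bounds[OF assms(3,4) ac(2)] y_def by simp
    have a01: "0 \<le> a" "a \<le> 1" and c01: "0 \<le> c" "c \<le> 1" using ac by (auto simp: feas_def)
    have "Bc \<alpha> (exp ((\<alpha>-1)*(\<epsilon>+\<eta>))) x c"
      by (rule M1b[OF a1 Eg ac(3) a01 c01]) (use \<open>x \<le> a\<close> \<open>c \<le> y\<close> xy in auto)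
    then show ?thesis
      by (rule M2b[OF a1 Eg _ x01 c01]) (use \<open>x \<le> a\<close> \<open>c \<le> y\<close> xy in auto)
  qed
  have 2: "Bc \<alpha> (exp ((\<alpha>-1)*(\<epsilon>+\<eta>))) y x" if eta: "\<eta> > 0" for \<eta>
  proof -
    have Eg: "exp ((\<alpha>-1)*(\<epsilon>+\<eta>)) \<ge> 1" using assms eta E_ge1[of \<alpha> "\<epsilon>+\<eta>"] by simp
    obtain a c where ac: "feas \<delta> q a" "feas \<delta> p c" "Bc \<alpha> (exp ((\<alpha>-1)*(\<epsilon>+\<eta>))) a c"
      using approx_obtain_Bc[of \<alpha> \<delta> q p \<eta> \<epsilon>] assms eta by auto
    have "a \<le> y" using feas_bounds[OF assms(3,4) ac(1)] y_def by simp
    have "x \<le> c" using feas_bounds[OF assms(3,4) ac(2)] x_def by simp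
    have a01: "0 \<le> a" "a \<le> 1" and c01: "0 \<le> c" "c \<le> 1" using ac by (auto simp: feas_def)
    have "Bc \<alpha> (exp ((\<alpha>-1)*(\<epsilon>+\<eta>))) y c"
      by (rule M1b[OF a1 Eg ac(3) a01 c01]) (use \<open>a \<le> y\<close> \<open>x \<le> c\<close> xy in auto)
    then show ?thesis
      by (rule M2b[OF a1 Eg _ y01 c01]) (use \<open>a \<le> y\<close> \<open>x \<le> c\<close> xy in auto)
  qed
  have "Bc \<alpha> (exp ((\<alpha>-1)*\<epsilon>)) x y" using Bc_lim[OF assms(1)] 1 by blast
  moreover have "Bc \<alpha> (exp ((\<alpha>-1)*\<epsilon>)) y x" using Bc_lim[OF assms(1)] 2 by blast
  ultimately show ?thesis by (simp add: CC_def x_def y_def)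
qed

definition Tset :: "real \<Rightarrow> real \<Rightarrow> real \<Rightarrow> real \<Rightarrow> real set" where
  "Tset \<alpha> E \<delta> q = {p \<in> {q..1}. CC \<alpha> E \<delta> p q}"

lemma CC_refl: "0 < \<delta> \<Longrightarrow> \<delta> < 1 \<Longrightarrow> 0 \<le> q \<Longrightarrow> q \<le> 1 \<Longrightarrow> CC \<alpha> E \<delta> q q"
  unfolding CC_def using lo_le_hi by blast

lemma CC_down:
  assumes "\<alpha> > 1" "E \<ge> 1" "0 < \<delta>" "\<delta> < 1" "0 \<le> q" "q \<le> p'" "p' \<le> p" "p \<le> 1" "CC \<alpha> E \<delta> p q"
  shows "CC \<alpha> E \<delta> p' q"
proof (cases "lo \<delta> p' \<le> hi \<delta> q")
  case True thus ?thesis by (simp add: CC_def)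
next
  case False
  have le: "lo \<delta> p' \<le> lo \<delta> p" using lo_mono assms by auto
  hence nle: "\<not> lo \<delta> p \<le> hi \<delta> q" using False by linarith
  hence B: "Bc \<alpha> E (lo \<delta> p) (hi \<delta> q)" "Bc \<alpha> E (hi \<delta> q) (lo \<delta> p)" using assms(9) by (auto simp: CC_def)
  have r: "0 \<le> lo \<delta> p" "lo \<delta> p \<le> 1" "0 \<le> hi \<delta> q" "hi \<delta> q \<le> 1" using lo_range hi_range assms by auto
  have a1: "\<alpha> \<ge> 1" using assms by simp
  have "Bc \<alpha> E (lo \<delta> p') (hi \<delta> q)"
    by (rule M1b[OF a1 assms(2) B(1) r]) (use False le in auto)
  moreover have "Bc \<alpha> E (hi \<delta> q) (lo \<delta> p')"
    by (rule M2b[OF a1 assms(2) B(2) r(3,4,1,2)]) (use False le in auto)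
  ultimately show ?thesis by (simp add: CC_def)
qed

lemma CC_mono_q:
  assumes "\<alpha> > 1" "E \<ge> 1" "0 < \<delta>" "\<delta> < 1" "0 \<le> q" "q \<le> q'" "q' \<le> p" "p \<le> 1" "CC \<alpha> E \<delta> p q"
  shows "CC \<alpha> E \<delta> p q'"
proof (cases "lo \<delta> p \<le> hi \<delta> q'")
  case True thus ?thesis by (simp add: CC_def)
next
  case False
  have le: "hi \<delta> q \<le> hi \<delta> q'" using hi_mono assms by auto
  hence nle: "\<not> lo \<delta> p \<le> hi \<delta> q" using False by linarith
  hence B: "Bc \<alpha> E (lo \<delta> p) (hi \<delta> q)" "Bc \<alpha> E (hi \<delta> q) (lo \<delta> p)" using assms(9) by (auto simp: CC_def)
  have r: "0 \<le> lo \<delta> p" "lo \<delta> p \<le> 1" "0 \<le> hi \<delta> q" "hi \<delta> q \<le> 1" using lo_range hi_range assms by auto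
  have a1: "\<alpha> \<ge> 1" using assms by simp
  have "Bc \<alpha> E (lo \<delta> p) (hi \<delta> q')"
    by (rule M2b[OF a1 assms(2) B(1) r]) (use False le in auto)
  moreover have "Bc \<alpha> E (hi \<delta> q') (lo \<delta> p)"
    by (rule M1b[OF a1 assms(2) B(2) r(3,4,1,2)]) (use False le in auto)
  ultimately show ?thesis by (simp add: CC_def)
qed

lemma lo_tendsto: "\<delta> < 1 \<Longrightarrow> ((\<lambda>p. lo \<delta> p) \<longlongrightarrow> lo \<delta> s) (at_left s)"
  unfolding lo_def by (intro tendsto_intros) auto

lemma lo_nonneg: "0 \<le> lo \<delta> p" unfolding lo_def by simp

lemma lo_lt1: "0 < \<delta> \<Longrightarrow> \<delta> < 1 \<Longrightarrow> p < 1 \<Longrightarrow> lo \<delta> p < 1"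
  unfolding lo_def by (auto simp: divide_less_eq)


lemma not_CC_eventually:
  assumes "\<alpha> > 1" "E \<ge> 1" "0 < \<delta>" "\<delta> < 1" "0 \<le> q" "q \<le> 1" "q < s" "s \<le> 1" "\<not> CC \<alpha> E \<delta> s q"
  shows "eventually (\<lambda>p. \<not> CC \<alpha> E \<delta> p q) (at_left s)"
proof -
  define y where "y = hi \<delta> q"
  define x where "x = lo \<delta> s"
  have y01: "0 \<le> y" "y \<le> 1" using hi_range assms unfolding y_def by auto
  have x01: "0 \<le> x" "x \<le> 1" using lo_range assms unfolding x_def by auto
  have xy: "y < x" and nB: "\<not> Bc \<alpha> E x y \<or> \<not> Bc \<alpha> E y x"
    using assms(9) unfolding CC_def x_def y_def by auto
  have tl: "((\<lambda>p. lo \<delta> p) \<longlongrightarrow> x) (at_left s)" unfolding x_def using lo_tendsto assms by auto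
  have ev1: "eventually (\<lambda>p. y < lo \<delta> p) (at_left s)" using order_tendstoD(1)[OF tl xy] .
  have evs: "eventually (\<lambda>p. p \<in> {q<..<s}) (at_left s)" using eventually_at_left_real[OF assms(7)] .
  have evl: "eventually (\<lambda>p. lo \<delta> p \<le> 1) (at_left s)"
    using evs by eventually_elim (use lo_range assms in auto)
  have ev2: "eventually (\<lambda>p. \<not> Bc \<alpha> E (lo \<delta> p) y \<or> \<not> Bc \<alpha> E y (lo \<delta> p)) (at_left s)"
  proof (cases "Bc \<alpha> E x y")
    case False
    show ?thesis
    proof (cases "y = 0")
      case True
      have "eventually (\<lambda>p. 0 < lo \<delta> p) (at_left s)" using ev1 True by simp
      thus ?thesis by eventually_elim (auto simp: Bc_def True)
    next
      case yp: False
      hence "y > 0" using y01 by simp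
      hence "FF \<alpha> x y > E" using False xy x01 by (auto simp: Bc_def)
      moreover have "((\<lambda>p. FF \<alpha> (lo \<delta> p) y) \<longlongrightarrow> FF \<alpha> x y) (at_left s)"
        unfolding FF_def tt_def
        by (intro tendsto_intros tl) (use assms lo_nonneg evl in auto)
      ultimately have "eventually (\<lambda>p. FF \<alpha> (lo \<delta> p) y > E) (at_left s)"
        using order_tendstoD(1) by blast
      thus ?thesis by eventually_elim (auto simp: Bc_def)
    qed
  next
    case True
    hence nB2: "\<not> Bc \<alpha> E y x" using nB by simp
    show ?thesis
    proof (cases "x = 1")
      case False
      hence "x < 1" using x01 by simp
      hence "FF \<alpha> y x > E" using nB2 xy y01 by (auto simp: Bc_def)
      moreover have "((\<lambda>p. FF \<alpha> y (lo \<delta> p)) \<longlongrightarrow> FF \<alpha> y x) (at_left s)"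
        unfolding FF_def tt_def
        by (intro tendsto_intros tl tendsto_powr) (use xy y01 \<open>x < 1\<close> in auto)
      ultimately have "eventually (\<lambda>p. FF \<alpha> y (lo \<delta> p) > E) (at_left s)"
        using order_tendstoD(1) by blast
      thus ?thesis by eventually_elim (auto simp: Bc_def)
    next
      case x1: True
      have "y < 1" using xy x1 by simp
      define K where "K = (1-y) powr \<alpha> / E"
      have Kp: "K > 0" unfolding K_def using \<open>y < 1\<close> assms(2) by simp
      have tg: "((\<lambda>p. (1 - lo \<delta> p) powr (\<alpha>-1)) \<longlongrightarrow> (1 - x) powr (\<alpha>-1)) (at_left s)"
        by (intro tendsto_intros tl) (use assms evl in auto)
      hence "eventually (\<lambda>p. (1 - lo \<delta> p) powr (\<alpha>-1) < K) (at_left s)"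
        using order_tendstoD(2)[OF tg] Kp x1 assms(1) by simp
      thus ?thesis using evs
      proof eventually_elim
        case (elim p)
        have "p < 1" using elim assms by auto
        hence l1: "lo \<delta> p < 1" using lo_lt1 assms by auto
        define g where "g = (1 - lo \<delta> p) powr (\<alpha>-1)"
        have gp: "g > 0" unfolding g_def using l1 by simp
        have "g * E < (1-y) powr \<alpha>" using elim assms(2) unfolding K_def g_def
          by (simp add: pos_less_divide_eq)
        hence "E < (1-y) powr \<alpha> / g" using gp by (simp add: pos_less_divide_eq mult.commute)
        also have "\<dots> = tt \<alpha> (1-y) (1 - lo \<delta> p)"
        proof -
          have "(1 - lo \<delta> p) powr (1-\<alpha>) = inverse g"
            unfolding g_def using powr_minus[of "1 - lo \<delta> p" "\<alpha>-1"] by simp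
          thus ?thesis unfolding tt_def by (simp add: divide_inverse)
        qed
        also have "\<dots> \<le> FF \<alpha> y (lo \<delta> p)" unfolding FF_def using tt_nonneg[of \<alpha> y "lo \<delta> p"] by linarith
        finally show ?case by (auto simp: Bc_def)
      qed
    qed
  qed
  show ?thesis using ev1 ev2 by eventually_elim (auto simp: CC_def y_def)
qed

lemma Tset_basic:
  assumes "0 < \<delta>" "\<delta> < 1" "0 \<le> q" "q \<le> 1"
  shows "q \<in> Tset \<alpha> E \<delta> q" "bdd_above (Tset \<alpha> E \<delta> q)" "Tset \<alpha> E \<delta> q \<noteq> {}"
proof -
  show "q \<in> Tset \<alpha> E \<delta> q" using CC_refl assms by (auto simp: Tset_def)
  thus "Tset \<alpha> E \<delta> q \<noteq> {}" by blast
  show "bdd_above (Tset \<alpha> E \<delta> q)" by (rule bdd_aboveI[of _ 1]) (auto simp: Tset_def)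
qed

lemma CC_sup:
  assumes "\<alpha> > 1" "E \<ge> 1" "0 < \<delta>" "\<delta> < 1" "0 \<le> q" "q \<le> 1"
  shows "CC \<alpha> E \<delta> (Sup (Tset \<alpha> E \<delta> q)) q \<and> q \<le> Sup (Tset \<alpha> E \<delta> q) \<and> Sup (Tset \<alpha> E \<delta> q) \<le> 1"
proof -
  define T where "T = Tset \<alpha> E \<delta> q"
  define s where "s = Sup T"
  have qT: "q \<in> T" and bT: "bdd_above T" and nT: "T \<noteq> {}" using Tset_basic assms unfolding T_def by auto
  have qs: "q \<le> s" unfolding s_def using cSup_upper[OF qT bT] .
  have s1: "s \<le> 1" unfolding s_def by (rule cSup_least[OF nT]) (auto simp: T_def Tset_def)
  have "CC \<alpha> E \<delta> s q"
  proof (rule ccontr)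
    assume nC: "\<not> CC \<alpha> E \<delta> s q"
    have "q \<noteq> s" using nC CC_refl assms by auto
    hence qs': "q < s" using qs by simp
    have "eventually (\<lambda>p. \<not> CC \<alpha> E \<delta> p q) (at_left s)"
      using not_CC_eventually[OF assms(1-6) qs' s1 nC] .
    hence "\<exists>b<s. \<forall>p>b. p < s \<longrightarrow> \<not> CC \<alpha> E \<delta> p q"
      by (subst (asm) eventually_at_left[OF qs'])
    then obtain b where b: "b < s" "\<And>p. b < p \<Longrightarrow> p < s \<Longrightarrow> \<not> CC \<alpha> E \<delta> p q"
      by blast
    have "max b q < Sup T" using b(1) qs' unfolding s_def by simp
    then obtain p where p: "p \<in> T" "max b q < p" using less_cSup_iff[OF nT bT] by blast
    have "p \<le> s" unfolding s_def using cSup_upper[OF p(1) bT] .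
    have "CC \<alpha> E \<delta> p q" using p(1) by (simp add: T_def Tset_def)
    show False
    proof (cases "p = s")
      case True thus False using nC \<open>CC \<alpha> E \<delta> p q\<close> by simp
    next
      case False
      hence "p < s" using \<open>p \<le> s\<close> by simp
      thus False using b(2)[of p] p(2) \<open>CC \<alpha> E \<delta> p q\<close> by simp
    qed
  qed
  thus ?thesis using qs s1 unfolding s_def T_def by simp
qed

lemma L_eq:
  assumes "\<alpha> > 1" "\<epsilon> \<ge> 0" "0 < \<delta>" "\<delta> < 1" "0 \<le> q" "q \<le> 1"
  shows "L_fun \<alpha> q \<epsilon> \<delta> = Sup (Tset \<alpha> (exp ((\<alpha>-1)*\<epsilon>)) \<delta> q)"
proof -
  have "{p \<in> {q..1}.
      approx_renyi_div \<alpha> \<delta> (bernoulli_pmf p) (bernoulli_pmf q) \<le> ereal \<epsilon> \<and>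
      approx_renyi_div \<alpha> \<delta> (bernoulli_pmf q) (bernoulli_pmf p) \<le> ereal \<epsilon>} = Tset \<alpha> (exp ((\<alpha>-1)*\<epsilon>)) \<delta> q"
    unfolding Tset_def using S_to_CC[OF assms(1-5)] CC_to_S[OF assms(1-5)] by auto
  thus ?thesis unfolding L_fun_def by simp
qed

lemma L_props:
  assumes "\<alpha> > 1" "\<epsilon> \<ge> 0" "0 < \<delta>" "\<delta> < 1" "0 \<le> q" "q \<le> 1"
  shows "q \<le> L_fun \<alpha> q \<epsilon> \<delta>" "L_fun \<alpha> q \<epsilon> \<delta> \<le> 1"
    "\<And>p. q \<le> p \<Longrightarrow> p \<le> L_fun \<alpha> q \<epsilon> \<delta> \<Longrightarrow> CC \<alpha> (exp ((\<alpha>-1)*\<epsilon>)) \<delta> p q"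
proof -
  have E: "exp ((\<alpha>-1)*\<epsilon>) \<ge> 1" using E_ge1 assms by simp
  note cs = CC_sup[OF assms(1) E assms(3-6)]
  show "q \<le> L_fun \<alpha> q \<epsilon> \<delta>" "L_fun \<alpha> q \<epsilon> \<delta> \<le> 1" using cs L_eq[OF assms] by auto
  fix p assume "q \<le> p" "p \<le> L_fun \<alpha> q \<epsilon> \<delta>"
  thus "CC \<alpha> (exp ((\<alpha>-1)*\<epsilon>)) \<delta> p q"
    using CC_down[OF assms(1) E assms(3,4,5), of p "L_fun \<alpha> q \<epsilon> \<delta>"] cs L_eq[OF assms] by auto
qed

lemma L_ge1:
  assumes "\<alpha> > 1" "\<epsilon> \<ge> 0" "\<delta> \<ge> 1" "0 \<le> q" "q \<le> 1"
  shows "L_fun \<alpha> q \<epsilon> \<delta> = 1"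
proof -
  have "approx_renyi_div \<alpha> \<delta> P Q \<le> ereal \<epsilon>" for P Q :: "bool pmf"
  proof -
    have "approx_renyi_div \<alpha> \<delta> P Q \<le> renyi_div \<alpha> P P"
    proof (rule approx_le)
      have "(1-\<delta>) * pmf P x \<le> 0" for x by (rule mult_nonpos_nonneg) (use assms(3) in auto)
      thus "\<forall>x. (1-\<delta>) * pmf P x \<le> pmf P x" "\<forall>x. (1-\<delta>) * pmf P x \<le> pmf Q x"
        by (meson order.trans pmf_nonneg)+
    qed (use assms in auto)
    moreover have "renyi_div \<alpha> P P \<le> ereal \<epsilon>" using renyi_self[of \<alpha> P] assms(2) by (simp add: zero_ereal_def)
    ultimately show ?thesis by (rule order.trans)
  qed
  hence "{p \<in> {q..1}.
      approx_renyi_div \<alpha> \<delta> (bernoulli_pmf p) (bernoulli_pmf q) \<le> ereal \<epsilon> \<and>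
      approx_renyi_div \<alpha> \<delta> (bernoulli_pmf q) (bernoulli_pmf p) \<le> ereal \<epsilon>} = {q..1}" by auto
  thus ?thesis unfolding L_fun_def using assms by simp
qed

lemma L_mono_q:
  assumes "\<alpha> > 1" "\<epsilon> \<ge> 0" "0 < \<delta>" "0 \<le> q" "q \<le> q'" "q' \<le> 1"
  shows "L_fun \<alpha> q \<epsilon> \<delta> \<le> L_fun \<alpha> q' \<epsilon> \<delta>"
proof (cases "\<delta> < 1")
  case False
  thus ?thesis using L_ge1 assms by simp
next
  case True
  define E where "E = exp ((\<alpha>-1)*\<epsilon>)"
  have E: "E \<ge> 1" unfolding E_def using E_ge1 assms by simp
  have q'1: "0 \<le> q'" using assms by simp
  have "Sup (Tset \<alpha> E \<delta> q) \<le> Sup (Tset \<alpha> E \<delta> q')"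
  proof (rule cSup_least)
    show "Tset \<alpha> E \<delta> q \<noteq> {}" using Tset_basic True assms by auto
    fix p assume p: "p \<in> Tset \<alpha> E \<delta> q"
    show "p \<le> Sup (Tset \<alpha> E \<delta> q')"
    proof (cases "p \<le> q'")
      case True
      thus ?thesis using CC_sup[OF assms(1) E assms(3) \<open>\<delta><1\<close> q'1 assms(6)] by linarith
    next
      case False
      hence "p \<in> Tset \<alpha> E \<delta> q'"
        using p CC_mono_q[OF assms(1) E assms(3) \<open>\<delta><1\<close> assms(4,5), of p] by (auto simp: Tset_def)
      thus ?thesis using Tset_basic[OF assms(3) \<open>\<delta><1\<close> q'1 assms(6)] by (simp add: cSup_upper)
    qed
  qed
  thus ?thesis using L_eq[OF assms(1,2,3) True] assms unfolding E_def by simp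
qed

lemma L_zero:
  assumes "\<alpha> > 1" "\<epsilon> \<ge> 0" "0 < \<delta>"
  shows "L_fun \<alpha> 0 \<epsilon> \<delta> = min \<delta> 1"
proof (cases "\<delta> < 1")
  case False
  thus ?thesis using L_ge1 assms by simp
next
  case True
  have "Tset \<alpha> E \<delta> 0 = {0..\<delta>}" for E
  proof -
    have h0: "hi \<delta> 0 = 0" by (simp add: hi_def)
    have "CC \<alpha> E \<delta> p 0 \<longleftrightarrow> lo \<delta> p \<le> 0" for p
      unfolding CC_def h0 Bc_def using lo_nonneg[of \<delta> p] by auto
    moreover have "lo \<delta> p \<le> 0 \<longleftrightarrow> p \<le> \<delta>" for p
      unfolding lo_def using True by (auto simp: divide_le_0_iff)
    ultimately show ?thesis unfolding Tset_def using True by auto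
  qed
  thus ?thesis using L_eq[OF assms(1,2,3) True] True assms(3) by simp
qed

definition bprod :: "('u::finite \<Rightarrow> real) \<Rightarrow> 'u set pmf" where
  "bprod a = map_pmf (\<lambda>b. {u. b u}) (Pi_pmf UNIV False (\<lambda>u. bernoulli_pmf (a u)))"

lemma mech_bprod: "mech f X = bprod (\<lambda>u. f (X u))"
  unfolding mech_def bprod_def ..

lemma pmf_bprod:
  fixes a :: "'u::finite \<Rightarrow> real"
  assumes "\<And>u. 0 \<le> a u" "\<And>u. a u \<le> 1"
  shows "pmf (bprod a) S = (\<Prod>u\<in>UNIV. if u \<in> S then a u else 1 - a u)"
proof -
  have inj: "inj (\<lambda>b::'u \<Rightarrow> bool. {u. b u})"
    unfolding inj_def by (auto simp: fun_eq_iff set_eq_iff)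
  have S: "S = (\<lambda>b. {u. b u}) (\<lambda>u. u \<in> S)" by simp
  have "pmf (bprod a) S = pmf (Pi_pmf UNIV False (\<lambda>u. bernoulli_pmf (a u))) (\<lambda>u. u \<in> S)"
    unfolding bprod_def by (subst S, subst pmf_map_inj'[OF inj]) (rule refl)
  also have "\<dots> = (\<Prod>u\<in>UNIV. pmf (bernoulli_pmf (a u)) (u \<in> S))"
    by (subst pmf_Pi) auto
  also have "\<dots> = (\<Prod>u\<in>UNIV. if u \<in> S then a u else 1 - a u)"
    by (rule prod.cong) (use assms in auto)
  finally show ?thesis .
qed

lemma sum_sets_prod:
  fixes f1 f2 :: "'u::finite \<Rightarrow> real"
  shows "(\<Sum>S\<in>UNIV. \<Prod>u\<in>UNIV. if u \<in> S then f1 u else f2 u) = (\<Prod>u\<in>UNIV. f1 u + f2 u)"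
proof -
  have "(\<Prod>u\<in>UNIV. f1 u + f2 u) = (\<Sum>X\<in>Pow UNIV. (\<Prod>x\<in>X. f1 x) * (\<Prod>x\<in>UNIV-X. f2 x))"
    by (rule prod_add) simp
  also have "\<dots> = (\<Sum>S\<in>UNIV. \<Prod>u\<in>UNIV. if u \<in> S then f1 u else f2 u)"
    by (rule sum.cong) (auto simp: prod.If_cases Compl_eq_Diff_UNIV)
  finally show ?thesis ..
qed

lemma weierstrass:
  fixes d :: "'a \<Rightarrow> real"
  assumes "finite I" "\<And>i. i \<in> I \<Longrightarrow> 0 \<le> d i \<and> d i \<le> 1"
  shows "1 - sum d I \<le> (\<Prod>i\<in>I. 1 - d i)"
  using assms
proof (induction I rule: finite_induct)
  case empty then show ?case by simp
next
  case (insert i I)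
  have di: "0 \<le> d i" "d i \<le> 1" using insert by auto
  have IH: "1 - sum d I \<le> (\<Prod>i\<in>I. 1 - d i)" using insert by auto
  have "0 \<le> sum d I" using insert by (auto intro: sum_nonneg)
  have "1 - sum d (insert i I) = 1 - d i - sum d I" using insert by simp
  also have "\<dots> \<le> (1 - d i) * (1 - sum d I)" using di \<open>0 \<le> sum d I\<close>
    by (simp add: algebra_simps)
  also have "\<dots> \<le> (1 - d i) * (\<Prod>i\<in>I. 1 - d i)" using IH di by (intro mult_left_mono) auto
  also have "\<dots> = (\<Prod>i\<in>insert i I. 1 - d i)" using insert by simp
  finally show ?case .
qed

lemma prod_approx:
  fixes p q a c d e :: "'u::finite \<Rightarrow> real"
  assumes al: "\<alpha> > 1"
    and pq: "\<And>u. 0 \<le> p u \<and> p u \<le> 1" "\<And>u. 0 \<le> q u \<and> q u \<le> 1"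
    and d: "\<And>u. 0 \<le> d u \<and> d u \<le> 1"
    and fa: "\<And>u. feas (d u) (p u) (a u)" and fc: "\<And>u. feas (d u) (q u) (c u)"
    and B: "\<And>u. Bc \<alpha> (exp ((\<alpha>-1) * e u)) (a u) (c u)"
    and e: "\<And>u. 0 \<le> e u"
    and sd: "(\<Sum>u\<in>UNIV. d u) \<le> \<delta>" and se: "(\<Sum>u\<in>UNIV. e u) \<le> \<epsilon>"
  shows "approx_renyi_div \<alpha> \<delta> (bprod p) (bprod q) \<le> ereal \<epsilon>"
proof -
  have a01: "\<And>u. 0 \<le> a u" "\<And>u. a u \<le> 1" and c01: "\<And>u. 0 \<le> c u" "\<And>u. c u \<le> 1"
    using fa fc by (auto simp: feas_def)
  have p01: "\<And>u. 0 \<le> p u" "\<And>u. p u \<le> 1" and q01: "\<And>u. 0 \<le> q u" "\<And>u. q u \<le> 1" using pq by auto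
  have dpos: "0 \<le> \<delta>" using sd d by (meson order.trans sum_nonneg)
  have epos: "0 \<le> \<epsilon>" using se e by (meson order.trans sum_nonneg)
  have W: "1 - \<delta> \<le> (\<Prod>u\<in>UNIV. 1 - d u)"
    using weierstrass[of UNIV d] d sd by force
  have mix: "(1-\<delta>) * pmf (bprod x) S \<le> pmf (bprod y) S"
    if fx: "\<And>u. feas (d u) (y u) (x u)" and y01: "\<And>u. 0 \<le> y u \<and> y u \<le> 1" for x y :: "'u \<Rightarrow> real" and S
  proof -
    have x01: "\<And>u. 0 \<le> x u" "\<And>u. x u \<le> 1" using fx by (auto simp: feas_def)
    have X0: "0 \<le> (\<Prod>u\<in>UNIV. if u \<in> S then x u else 1 - x u)"
      using x01 by (intro prod_nonneg) auto
    have "(1-\<delta>) * pmf (bprod x) S \<le> (\<Prod>u\<in>UNIV. 1 - d u) * (\<Prod>u\<in>UNIV. if u \<in> S then x u else 1 - x u)"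
      unfolding pmf_bprod[OF x01] by (rule mult_right_mono[OF W X0])
    also have "\<dots> = (\<Prod>u\<in>UNIV. (1 - d u) * (if u \<in> S then x u else 1 - x u))"
      by (simp add: prod.distrib)
    also have "\<dots> \<le> (\<Prod>u\<in>UNIV. if u \<in> S then y u else 1 - y u)"
      by (rule prod_mono) (use fx d x01 in \<open>auto simp: feas_def\<close>)
    also have "\<dots> = pmf (bprod y) S" using pmf_bprod[of y] y01 by simp
    finally show ?thesis .
  qed
  have "approx_renyi_div \<alpha> \<delta> (bprod p) (bprod q) \<le> renyi_div \<alpha> (bprod a) (bprod c)"
    by (rule approx_le[OF dpos]) (use mix fa fc pq in auto)
  also have "renyi_div \<alpha> (bprod a) (bprod c) \<le> ereal \<epsilon>"
  proof -
    define A where "A S u = (if u \<in> S then a u else 1 - a u)" for S u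
    define C where "C S u = (if u \<in> S then c u else 1 - c u)" for S u
    have pa: "pmf (bprod a) S = (\<Prod>u\<in>UNIV. A S u)" for S unfolding A_def using pmf_bprod[OF a01] .
    have pc: "pmf (bprod c) S = (\<Prod>u\<in>UNIV. C S u)" for S unfolding C_def using pmf_bprod[OF c01] .
    have A0: "0 \<le> A S u" for S u using a01 by (simp add: A_def)
    have C0: "0 \<le> C S u" for S u using c01 by (simp add: C_def)
    have supp: "\<not> (\<exists>S. pmf (bprod a) S > 0 \<and> pmf (bprod c) S = 0)"
    proof
      assume "\<exists>S. pmf (bprod a) S > 0 \<and> pmf (bprod c) S = 0"
      then obtain S where S: "pmf (bprod a) S > 0" "pmf (bprod c) S = 0" by blast
      have P: "(\<Prod>u\<in>UNIV. A S u) > 0" using S(1) by (simp only: pa)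
      have "\<forall>u. A S u \<noteq> 0"
      proof
        fix u show "A S u \<noteq> 0"
        proof
          assume "A S u = 0"
          hence "(\<Prod>u\<in>UNIV. A S u) = 0" by (metis UNIV_I finite prod_zero_iff)
          thus False using P by (metis less_irrefl)
        qed
      qed
      hence "\<forall>u. A S u > 0" using A0 by (simp add: order_le_neq_trans)
      hence "\<forall>u. C S u > 0" using B unfolding A_def C_def Bc_def by (auto split: if_splits)
      hence "pmf (bprod c) S > 0" unfolding pc by (simp add: prod_pos)
      thus False using S(2) by simp
    qed
    have "(\<Sum>S\<in>UNIV. pmf (bprod a) S powr \<alpha> * pmf (bprod c) S powr (1 - \<alpha>))
        = (\<Sum>S\<in>UNIV. \<Prod>u\<in>UNIV. A S u powr \<alpha> * C S u powr (1 - \<alpha>))"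
      unfolding pa pc by (simp add: prod_powr_distrib A0 C0 prod.distrib)
    also have "\<dots> = (\<Sum>S\<in>UNIV. \<Prod>u\<in>UNIV. if u \<in> S then tt \<alpha> (a u) (c u) else tt \<alpha> (1 - a u) (1 - c u))"
      by (intro sum.cong prod.cong) (auto simp: A_def C_def tt_def)
    also have "\<dots> = (\<Prod>u\<in>UNIV. FF \<alpha> (a u) (c u))"
      unfolding sum_sets_prod FF_def ..
    finally have sumeq: "(\<Sum>S\<in>UNIV. pmf (bprod a) S powr \<alpha> * pmf (bprod c) S powr (1 - \<alpha>))
        = (\<Prod>u\<in>UNIV. FF \<alpha> (a u) (c u))" .
    have "(\<Prod>u\<in>UNIV. FF \<alpha> (a u) (c u)) \<le> (\<Prod>u\<in>UNIV. exp ((\<alpha>-1) * e u))"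
      by (rule prod_mono) (use B in \<open>auto simp: Bc_def FF_def intro: add_nonneg_nonneg tt_nonneg\<close>)
    also have "\<dots> = exp ((\<alpha>-1) * (\<Sum>u\<in>UNIV. e u))" by (simp add: exp_sum sum_distrib_left)
    also have "\<dots> \<le> exp ((\<alpha>-1) * \<epsilon>)" using se al by simp
    finally have pb: "(\<Prod>u\<in>UNIV. FF \<alpha> (a u) (c u)) \<le> exp ((\<alpha>-1) * \<epsilon>)" .
    have "ln (\<Prod>u\<in>UNIV. FF \<alpha> (a u) (c u)) \<le> (\<alpha>-1) * \<epsilon>"
    proof (cases "(\<Prod>u\<in>UNIV. FF \<alpha> (a u) (c u)) > 0")
      case True thus ?thesis using pb by (metis ln_exp ln_le_cancel_iff exp_gt_zero)
    next
      case False
      have "(\<Prod>u\<in>UNIV. FF \<alpha> (a u) (c u)) \<ge> 0"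
        by (intro prod_nonneg) (auto simp: FF_def intro: add_nonneg_nonneg tt_nonneg)
      hence Z: "(\<Prod>u\<in>UNIV. FF \<alpha> (a u) (c u)) = 0" using False by linarith
      have "0 \<le> (\<alpha>-1) * \<epsilon>" using epos al by simp
      thus ?thesis by (subst Z) simp
    qed
    hence "ln (\<Prod>u\<in>UNIV. FF \<alpha> (a u) (c u)) / (\<alpha> - 1) \<le> \<epsilon>" using al by (simp add: divide_le_eq mult.commute)
    thus ?thesis unfolding renyi_div_def using supp sumeq by simp
  qed
  finally show ?thesis .
qed

declare psi.simps[simp del]

lemma L_bounds:
  assumes "\<alpha> > 1" "\<epsilon> \<ge> 0" "0 < \<delta>" "0 \<le> q" "q \<le> 1"
  shows "q \<le> L_fun \<alpha> q \<epsilon> \<delta> \<and> L_fun \<alpha> q \<epsilon> \<delta> \<le> 1"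
proof (cases "\<delta> < 1")
  case True thus ?thesis using L_props[OF assms(1,2,3) True assms(4,5)] by simp
next
  case False thus ?thesis using L_ge1[OF assms(1,2) _ assms(4,5)] assms by simp
qed

lemma lr_sum:
  fixes X X' :: "'u::finite \<Rightarrow> real"
  assumes "r > 0" "lr_dist r X X' \<le> \<Delta>r"
  shows "(\<Sum>u\<in>UNIV. \<bar>X u - X' u\<bar> powr r) \<le> \<Delta>r powr r"
proof -
  define S where "S = (\<Sum>u\<in>UNIV. \<bar>X u - X' u\<bar> powr r)"
  have S0: "0 \<le> S" unfolding S_def by (intro sum_nonneg) auto
  have "S = (S powr (1/r)) powr r" using assms(1) S0 by (simp add: powr_powr powr_one)
  also have "\<dots> \<le> \<Delta>r powr r"
    using assms unfolding lr_dist_def S_def[symmetric] by (intro powr_mono2) auto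
  finally show ?thesis unfolding S_def .
qed

lemma lr_single:
  fixes X X' :: "'u::finite \<Rightarrow> real"
  assumes "r > 0" "lr_dist r X X' \<le> \<Delta>r"
  shows "\<bar>X u - X' u\<bar> \<le> \<Delta>r"
proof -
  define S where "S = (\<Sum>u\<in>UNIV. \<bar>X u - X' u\<bar> powr r)"
  have "\<bar>X u - X' u\<bar> powr r \<le> S" unfolding S_def by (rule member_le_sum) auto
  hence "(\<bar>X u - X' u\<bar> powr r) powr (1/r) \<le> S powr (1/r)" using assms(1) by (intro powr_mono2) auto
  moreover have "(\<bar>X u - X' u\<bar> powr r) powr (1/r) = \<bar>X u - X' u\<bar>" using assms(1) by (simp add: powr_powr)
  ultimately show ?thesis using assms unfolding lr_dist_def S_def by simp
qed

lemma floor_gap: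
  fixes x x' D Dd :: real
  assumes "0 \<le> x" "0 \<le> x'" "Dd > 0" "nat \<lfloor>x'/Dd\<rfloor> < nat \<lfloor>x/Dd\<rfloor>" "\<bar>x - x'\<bar> \<le> D"
  shows "Dd * real (nat \<lfloor>x/Dd\<rfloor> - nat \<lfloor>x'/Dd\<rfloor> - 1) \<le> \<bar>x - x'\<bar>"
    and "nat \<lfloor>x/Dd\<rfloor> - nat \<lfloor>x'/Dd\<rfloor> \<le> N_disc D Dd"
proof -
  have f0: "0 \<le> \<lfloor>x/Dd\<rfloor>" "0 \<le> \<lfloor>x'/Dd\<rfloor>" using assms by auto
  define k where "k = \<lfloor>x/Dd\<rfloor> - \<lfloor>x'/Dd\<rfloor>"
  have kpos: "k \<ge> 1" using assms(4) f0 unfolding k_def by linarith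
  have kn: "int (nat \<lfloor>x/Dd\<rfloor> - nat \<lfloor>x'/Dd\<rfloor>) = k" using f0 assms(4) unfolding k_def by linarith
  have fl: "real_of_int \<lfloor>x/Dd\<rfloor> \<le> x/Dd" "x'/Dd < real_of_int \<lfloor>x'/Dd\<rfloor> + 1" by linarith+
  have "real_of_int (k - 1) = real_of_int \<lfloor>x/Dd\<rfloor> - real_of_int \<lfloor>x'/Dd\<rfloor> - 1" by (simp add: k_def)
  also have "\<dots> < x/Dd - x'/Dd" using fl by linarith
  also have "\<dots> = (x - x')/Dd" by (simp add: diff_divide_distrib)
  finally have lt: "real_of_int (k - 1) < (x - x')/Dd" .
  have "real (nat \<lfloor>x/Dd\<rfloor> - nat \<lfloor>x'/Dd\<rfloor> - 1) = real_of_int (k - 1)"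
    using kn kpos by (metis of_int_of_nat_eq of_nat_diff of_int_diff of_int_1 le_numeral_extra(4) nat_int_comparison(3) nat_less_le int_ops(2) kn)
  also have "\<dots> \<le> (x - x')/Dd" using lt by simp
  finally have "Dd * real (nat \<lfloor>x/Dd\<rfloor> - nat \<lfloor>x'/Dd\<rfloor> - 1) \<le> x - x'"
    using assms(3) by (simp add: pos_le_divide_eq mult.commute)
  thus "Dd * real (nat \<lfloor>x/Dd\<rfloor> - nat \<lfloor>x'/Dd\<rfloor> - 1) \<le> \<bar>x - x'\<bar>" by linarith
  have "(x - x')/Dd \<le> D/Dd" using assms(3,5) by (intro divide_right_mono) auto
  also have "\<dots> \<le> real_of_int \<lceil>D/Dd\<rceil>" by (rule le_of_int_ceiling)
  finally have "k - 1 < \<lceil>D/Dd\<rceil>" using lt by linarith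
  hence "k \<le> \<lceil>D/Dd\<rceil>" by linarith
  thus "nat \<lfloor>x/Dd\<rfloor> - nat \<lfloor>x'/Dd\<rfloor> \<le> N_disc D Dd" unfolding N_disc_def using kn by linarith
qed

context
  fixes \<alpha> \<epsilon>0 \<delta>0 r \<epsilon>1 \<delta>1 \<Delta>d \<Delta> :: real
  assumes pos: "\<alpha> > 1" "\<epsilon>0 > 0" "\<delta>0 > 0" "r > 0" "\<epsilon>1 > 0" "\<delta>1 > 0" "\<Delta>d > 0" "\<Delta> > 0"
begin

abbreviation "ps \<equiv> psi \<alpha> \<epsilon>0 \<delta>0 r \<epsilon>1 \<delta>1 \<Delta>d \<Delta>"
definition "eps i = \<epsilon>0 + \<epsilon>1 * (\<Delta>d * real (i - 1)) powr r"
definition "del i = \<delta>0 + \<delta>1 * (\<Delta>d * real (i - 1)) powr r"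
abbreviation "Nn \<equiv> N_disc \<Delta> \<Delta>d"

lemma eps_nonneg: "eps i \<ge> 0"
  unfolding eps_def using pos by (intro add_nonneg_nonneg mult_nonneg_nonneg) auto

lemma del_pos: "del i > 0"
  unfolding del_def using pos by (intro add_pos_nonneg mult_nonneg_nonneg) auto

lemma del_mono: "i \<le> j \<Longrightarrow> del i \<le> del j"
  unfolding del_def using pos
  by (intro add_left_mono mult_left_mono powr_mono2) auto

lemma ps_eq: "n > 0 \<Longrightarrow> ps n = Min ((\<lambda>i. L_fun \<alpha> (ps (n - i)) (eps i) (del i)) ` {1..min n Nn})"
  by (subst psi.simps) (simp add: eps_def del_def)

lemma ps_0: "ps 0 = 0"
  by (subst psi.simps) simp

lemma Nn_pos: "Nn \<ge> 1"
proof -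
  have "\<Delta> / \<Delta>d > 0" using pos by simp
  hence "real_of_int \<lceil>\<Delta> / \<Delta>d\<rceil> > 0" using le_of_int_ceiling[of "\<Delta> / \<Delta>d"] by linarith
  hence "\<lceil>\<Delta> / \<Delta>d\<rceil> \<ge> 1" by linarith
  thus ?thesis unfolding N_disc_def by linarith
qed

lemma ps_range: "0 \<le> ps n \<and> ps n \<le> 1"
proof (induction n rule: less_induct)
  case (less n)
  show ?case
  proof (cases "n = 0")
    case True thus ?thesis using ps_0 by simp
  next
    case False
    define A where "A = (\<lambda>i. L_fun \<alpha> (ps (n - i)) (eps i) (del i)) ` {1..min n Nn}"
    have "A \<noteq> {}" unfolding A_def using False Nn_pos by auto
    hence "Min A \<in> A" unfolding A_def by (intro Min_in) auto
    then obtain i where i: "i \<in> {1..min n Nn}" "Min A = L_fun \<alpha> (ps (n - i)) (eps i) (del i)"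
      unfolding A_def by auto
    have "0 \<le> ps (n-i) \<and> ps (n-i) \<le> 1" using less i by auto
    hence "ps (n-i) \<le> Min A \<and> Min A \<le> 1" unfolding i(2)
      using L_bounds[OF pos(1) eps_nonneg del_pos] by auto
    thus ?thesis using ps_eq[of n] False \<open>0 \<le> ps (n-i) \<and> _\<close> unfolding A_def by auto
  qed
qed

lemma ps_le_L: "1 \<le> i \<Longrightarrow> i \<le> n \<Longrightarrow> i \<le> Nn \<Longrightarrow> ps n \<le> L_fun \<alpha> (ps (n - i)) (eps i) (del i)"
  using ps_eq[of n] by (auto intro!: Min_le)

lemma ps_Suc: "ps n \<le> ps (Suc n)"
proof (induction n rule: less_induct)
  case (less n)
  show ?case
  proof (cases "n = 0")
    case True thus ?thesis using ps_0 ps_range[of 1] by simp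
  next
    case False
    have "ps n \<le> Min ((\<lambda>i. L_fun \<alpha> (ps (Suc n - i)) (eps i) (del i)) ` {1..min (Suc n) Nn})"
    proof (rule Min.boundedI)
      show "finite ((\<lambda>i. L_fun \<alpha> (ps (Suc n - i)) (eps i) (del i)) ` {1..min (Suc n) Nn})" by simp
      show "(\<lambda>i. L_fun \<alpha> (ps (Suc n - i)) (eps i) (del i)) ` {1..min (Suc n) Nn} \<noteq> {}"
        using Nn_pos by auto
      fix b assume "b \<in> (\<lambda>i. L_fun \<alpha> (ps (Suc n - i)) (eps i) (del i)) ` {1..min (Suc n) Nn}"
      then obtain i where i: "1 \<le> i" "i \<le> Suc n" "i \<le> Nn" and b: "b = L_fun \<alpha> (ps (Suc n - i)) (eps i) (del i)"
        by auto
      show "ps n \<le> b"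
      proof (cases "i \<le> n")
        case True
        have "ps (n - i) \<le> ps (Suc (n - i))" using less[of "n - i"] i True by auto
        also have "Suc (n - i) = Suc n - i" using True by simp
        finally have "L_fun \<alpha> (ps (n - i)) (eps i) (del i) \<le> b"
          unfolding b using L_mono_q[OF pos(1) eps_nonneg del_pos] ps_range by auto
        thus ?thesis using ps_le_L[OF i(1) True i(3)] by linarith
      next
        case False
        hence "i = Suc n" using i by simp
        have "n \<le> Nn" using i \<open>i = Suc n\<close> by simp
        have "ps n \<le> L_fun \<alpha> (ps (n - n)) (eps n) (del n)"
          using ps_le_L[of n n] \<open>n \<noteq> 0\<close> \<open>n \<le> Nn\<close> by simp
        also have "\<dots> = min (del n) 1" using L_zero[OF pos(1) eps_nonneg del_pos] ps_0 by simp
        also have "\<dots> \<le> min (del i) 1" using del_mono[of n i] \<open>i = Suc n\<close> by simp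
        also have "\<dots> = b" unfolding b using L_zero[OF pos(1) eps_nonneg del_pos] ps_0 \<open>i = Suc n\<close> by simp
        finally show ?thesis .
      qed
    qed
    thus ?thesis using ps_eq[of "Suc n"] by simp
  qed
qed

lemma ps_mono: "m \<le> n \<Longrightarrow> ps m \<le> ps n"
  using lift_Suc_mono_le[of ps, OF ps_Suc] by blast

lemma ps_CC:
  assumes "n' < n" "n - n' \<le> Nn" "del (n - n') < 1"
  shows "CC \<alpha> (exp ((\<alpha>-1) * eps (n - n'))) (del (n - n')) (ps n) (ps n')"
proof -
  have "ps n \<le> L_fun \<alpha> (ps n') (eps (n - n')) (del (n - n'))"
    using ps_le_L[of "n - n'" n] assms by simp
  moreover have "ps n' \<le> ps n" using ps_mono assms by simp
  ultimately show ?thesis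
    using L_props(3)[OF pos(1) eps_nonneg del_pos assms(3)] ps_range by blast
qed

lemma sum_if_card:
  fixes X X' :: "'u::finite \<Rightarrow> real"
  shows "(\<Sum>u\<in>UNIV. if X u \<noteq> X' u then c else 0) = c * real (l0_dist X X')"
proof -
  have "(\<Sum>u\<in>UNIV. if X u \<noteq> X' u then c else 0) = (\<Sum>u\<in>{u\<in>UNIV. X u \<noteq> X' u}. c)"
    by (rule sum.inter_filter[symmetric]) simp
  also have "\<dots> = c * real (l0_dist X X')" by (simp add: l0_dist_def mult.commute)
  finally show ?thesis .
qed

lemma one_dir:
  fixes X X' :: "'u::finite \<Rightarrow> real" and \<Delta>0 :: nat and \<Delta>r :: real
  assumes nb: "neighbors \<Delta>0 \<Delta>r r X X'" and DrD: "\<Delta>r \<le> \<Delta>"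
    and dl: "\<delta>0 * real \<Delta>0 + \<delta>1 * \<Delta>r powr r < 1"
  shows "approx_renyi_div \<alpha> (\<delta>0 * real \<Delta>0 + \<delta>1 * \<Delta>r powr r)
           (mech (phi \<alpha> \<epsilon>0 \<delta>0 r \<epsilon>1 \<delta>1 \<Delta>d \<Delta>) X) (mech (phi \<alpha> \<epsilon>0 \<delta>0 r \<epsilon>1 \<delta>1 \<Delta>d \<Delta>) X')
         \<le> ereal (\<epsilon>0 * real \<Delta>0 + \<epsilon>1 * \<Delta>r powr r)"
proof -
  have X0: "\<And>u. 0 \<le> X u" and X'0: "\<And>u. 0 \<le> X' u" and l0: "l0_dist X X' \<le> \<Delta>0"
    and lr: "lr_dist r X X' \<le> \<Delta>r" using nb unfolding neighbors_def by auto
  define n where "n u = nat \<lfloor>X u / \<Delta>d\<rfloor>" for u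
  define n' where "n' u = nat \<lfloor>X' u / \<Delta>d\<rfloor>" for u
  define k where "k u = (if n u \<le> n' u then n' u - n u else n u - n' u)" for u
  define d where "d u = (if k u = 0 then 0 else del (k u))" for u
  define e where "e u = (if k u = 0 then 0 else eps (k u))" for u
  define p where "p u = ps (n u)" for u
  define q where "q u = ps (n' u)" for u
  have mX: "mech (phi \<alpha> \<epsilon>0 \<delta>0 r \<epsilon>1 \<delta>1 \<Delta>d \<Delta>) X = bprod p"
    unfolding mech_bprod phi_def p_def n_def ..
  have mX': "mech (phi \<alpha> \<epsilon>0 \<delta>0 r \<epsilon>1 \<delta>1 \<Delta>d \<Delta>) X' = bprod q"
    unfolding mech_bprod phi_def q_def n'_def ..
  have difD: "\<bar>X u - X' u\<bar> \<le> \<Delta>" for u using lr_single[OF pos(4) lr] DrD by (meson order.trans)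
  have kgap: "X u \<noteq> X' u \<and> \<Delta>d * real (k u - 1) \<le> \<bar>X u - X' u\<bar> \<and> k u \<le> Nn" if "k u > 0" for u
  proof (cases "n u \<le> n' u")
    case True
    hence lt: "n u < n' u" using that unfolding k_def by auto
    have h: "\<bar>X' u - X u\<bar> \<le> \<Delta>" using difD[of u] by (simp add: abs_minus_commute)
    note FG = floor_gap[OF X'0 X0 pos(7), of u u \<Delta>, folded n_def n'_def]
    have kk: "k u = n' u - n u" using True by (simp add: k_def)
    have "\<Delta>d * real (k u - 1) \<le> \<bar>X' u - X u\<bar> \<and> k u \<le> Nn"
      unfolding kk using FG(1)[OF lt h] FG(2)[OF lt h] by blast
    moreover have "X u \<noteq> X' u" using lt unfolding n_def n'_def by auto
    ultimately show ?thesis by (simp add: abs_minus_commute)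
  next
    case False
    hence lt: "n' u < n u" by simp
    note FG = floor_gap[OF X0 X'0 pos(7), of u u \<Delta>, folded n_def n'_def]
    have kk: "k u = n u - n' u" using False by (simp add: k_def)
    have "\<Delta>d * real (k u - 1) \<le> \<bar>X u - X' u\<bar> \<and> k u \<le> Nn"
      unfolding kk using FG(1)[OF lt difD[of u]] FG(2)[OF lt difD[of u]] by blast
    moreover have "X u \<noteq> X' u" using lt unfolding n_def n'_def by auto
    ultimately show ?thesis by simp
  qed
  have dle: "d u \<le> (if X u \<noteq> X' u then \<delta>0 else 0) + \<delta>1 * \<bar>X u - X' u\<bar> powr r" for u
  proof (cases "k u = 0")
    case True thus ?thesis unfolding d_def using pos by simp
  next
    case False
    hence g: "X u \<noteq> X' u" "\<Delta>d * real (k u - 1) \<le> \<bar>X u - X' u\<bar>" using kgap[of u] by auto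
    have "(\<Delta>d * real (k u - 1)) powr r \<le> \<bar>X u - X' u\<bar> powr r"
      using g pos by (intro powr_mono2) auto
    thus ?thesis unfolding d_def del_def using False g pos by simp
  qed
  have ele: "e u \<le> (if X u \<noteq> X' u then \<epsilon>0 else 0) + \<epsilon>1 * \<bar>X u - X' u\<bar> powr r" for u
  proof (cases "k u = 0")
    case True thus ?thesis unfolding e_def using pos by simp
  next
    case False
    hence g: "X u \<noteq> X' u" "\<Delta>d * real (k u - 1) \<le> \<bar>X u - X' u\<bar>" using kgap[of u] by auto
    have "(\<Delta>d * real (k u - 1)) powr r \<le> \<bar>X u - X' u\<bar> powr r"
      using g pos by (intro powr_mono2) auto
    thus ?thesis unfolding e_def eps_def using False g pos by simp
  qed
  have SP: "(\<Sum>u\<in>UNIV. \<bar>X u - X' u\<bar> powr r) \<le> \<Delta>r powr r" using lr_sum[OF pos(4) lr] .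
  have sd: "(\<Sum>u\<in>UNIV. d u) \<le> \<delta>0 * real \<Delta>0 + \<delta>1 * \<Delta>r powr r"
  proof -
    have "(\<Sum>u\<in>UNIV. d u) \<le> (\<Sum>u\<in>UNIV. (if X u \<noteq> X' u then \<delta>0 else 0) + \<delta>1 * \<bar>X u - X' u\<bar> powr r)"
      by (rule sum_mono) (rule dle)
    also have "\<dots> = \<delta>0 * real (l0_dist X X') + \<delta>1 * (\<Sum>u\<in>UNIV. \<bar>X u - X' u\<bar> powr r)"
      by (simp add: sum.distrib sum_if_card sum_distrib_left)
    also have "\<dots> \<le> \<delta>0 * real \<Delta>0 + \<delta>1 * \<Delta>r powr r"
      using l0 SP pos by (intro add_mono mult_left_mono) auto
    finally show ?thesis .
  qed
  have se: "(\<Sum>u\<in>UNIV. e u) \<le> \<epsilon>0 * real \<Delta>0 + \<epsilon>1 * \<Delta>r powr r"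
  proof -
    have "(\<Sum>u\<in>UNIV. e u) \<le> (\<Sum>u\<in>UNIV. (if X u \<noteq> X' u then \<epsilon>0 else 0) + \<epsilon>1 * \<bar>X u - X' u\<bar> powr r)"
      by (rule sum_mono) (rule ele)
    also have "\<dots> = \<epsilon>0 * real (l0_dist X X') + \<epsilon>1 * (\<Sum>u\<in>UNIV. \<bar>X u - X' u\<bar> powr r)"
      by (simp add: sum.distrib sum_if_card sum_distrib_left)
    also have "\<dots> \<le> \<epsilon>0 * real \<Delta>0 + \<epsilon>1 * \<Delta>r powr r"
      using l0 SP pos by (intro add_mono mult_left_mono) auto
    finally show ?thesis .
  qed
  have d0: "0 \<le> d u" for u unfolding d_def using del_pos[of "k u"] by simp
  have e0: "0 \<le> e u" for u unfolding e_def using eps_nonneg[of "k u"] by simp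
  have dlt: "d u < 1" for u
  proof -
    have "d u \<le> (\<Sum>u\<in>UNIV. d u)" by (rule member_le_sum) (use d0 in auto)
    thus ?thesis using sd dl by linarith
  qed
  have pq01: "\<And>u. 0 \<le> p u \<and> p u \<le> 1" "\<And>u. 0 \<le> q u \<and> q u \<le> 1"
    unfolding p_def q_def using ps_range by auto
  have ex: "\<exists>ac. feas (d u) (p u) (fst ac) \<and> feas (d u) (q u) (snd ac) \<and> Bc \<alpha> (exp ((\<alpha>-1) * e u)) (fst ac) (snd ac)" for u
  proof (cases "k u = 0")
    case True
    hence "n u = n' u" unfolding k_def by (auto split: if_splits)
    hence pq: "p u = q u" unfolding p_def q_def by simp
    have "feas (d u) (p u) (p u)" using True pq01[of u] unfolding d_def feas_def by simp
    moreover have "Bc \<alpha> (exp ((\<alpha>-1) * e u)) (p u) (p u)"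
      using True pq01[of u] unfolding e_def by (intro Bc_refl) auto
    ultimately show ?thesis using pq by (intro exI[of _ "(p u, p u)"]) simp
  next
    case False
    have du: "d u = del (k u)" "e u = eps (k u)" using False unfolding d_def e_def by auto
    have kN: "k u \<le> Nn" using kgap[of u] False by simp
    have dk1: "del (k u) < 1" using dlt[of u] du by simp
    have E1: "exp ((\<alpha>-1) * eps (k u)) \<ge> 1" using E_ge1[OF pos(1) eps_nonneg] .
    show ?thesis
    proof (cases "n u \<le> n' u")
      case True
      hence lt: "n u < n' u" and kk: "k u = n' u - n u" using False unfolding k_def by auto
      have CCq: "CC \<alpha> (exp ((\<alpha>-1) * eps (k u))) (del (k u)) (q u) (p u)"
        unfolding p_def q_def kk using ps_CC[of "n u" "n' u"] lt kN dk1 kk by simp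
      have "p u \<le> q u" unfolding p_def q_def using ps_mono lt by simp
      then obtain a c where "feas (del (k u)) (p u) a" "feas (del (k u)) (q u) c"
          "Bc \<alpha> (exp ((\<alpha>-1) * eps (k u))) a c"
        using CC_wit(2)[OF pos(1) E1 del_pos dk1 _ _ _ CCq] pq01[of u] by blast
      thus ?thesis unfolding du by (intro exI[of _ "(a, c)"]) simp
    next
      case F2: False
      hence lt: "n' u < n u" and kk: "k u = n u - n' u" unfolding k_def by auto
      have CCp: "CC \<alpha> (exp ((\<alpha>-1) * eps (k u))) (del (k u)) (p u) (q u)"
        unfolding p_def q_def kk using ps_CC[of "n' u" "n u"] lt kN dk1 kk by simp
      have "q u \<le> p u" unfolding p_def q_def using ps_mono lt by simp
      then obtain a c where "feas (del (k u)) (p u) a" "feas (del (k u)) (q u) c"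
          "Bc \<alpha> (exp ((\<alpha>-1) * eps (k u))) a c"
        using CC_wit(1)[OF pos(1) E1 del_pos dk1 _ _ _ CCp] pq01[of u] by blast
      thus ?thesis unfolding du by (intro exI[of _ "(a, c)"]) simp
    qed
  qed
  then obtain f where f: "\<And>u. feas (d u) (p u) (fst (f u)) \<and> feas (d u) (q u) (snd (f u)) \<and>
      Bc \<alpha> (exp ((\<alpha>-1) * e u)) (fst (f u)) (snd (f u))"
    by metis
  have "approx_renyi_div \<alpha> (\<delta>0 * real \<Delta>0 + \<delta>1 * \<Delta>r powr r) (bprod p) (bprod q)
         \<le> ereal (\<epsilon>0 * real \<Delta>0 + \<epsilon>1 * \<Delta>r powr r)"
    by (rule prod_approx[OF pos(1) pq01, where d=d and a="\<lambda>u. fst (f u)" and c="\<lambda>u. snd (f u)" and e=e])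
       (use f d0 dlt e0 sd se in \<open>auto intro: less_imp_le\<close>)
  thus ?thesis unfolding mX mX' .
qed

end

theorem mainTheorem6:
  fixes \<alpha> \<epsilon>0 \<delta>0 r \<epsilon>1 \<delta>1 \<Delta>disc \<Delta> \<Delta>r :: real and \<Delta>0 :: nat
  assumes "\<alpha> > 1"
    and "\<epsilon>0 > 0" "\<delta>0 > 0" "r > 0" "\<epsilon>1 > 0" "\<delta>1 > 0" "\<Delta>disc > 0" "\<Delta> > 0"
    and "\<Delta>r \<le> \<Delta>"
    and "\<delta>0 * real \<Delta>0 + \<delta>1 * \<Delta>r powr r < 1"
  shows "is_RDP (\<delta>0 * real \<Delta>0 + \<delta>1 * \<Delta>r powr r) \<alpha> (\<epsilon>0 * real \<Delta>0 + \<epsilon>1 * \<Delta>r powr r)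
           (neighbors \<Delta>0 \<Delta>r r :: ('u::finite \<Rightarrow> real) \<Rightarrow> _ \<Rightarrow> bool)
           (mech (phi \<alpha> \<epsilon>0 \<delta>0 r \<epsilon>1 \<delta>1 \<Delta>disc \<Delta>))"
proof -
  have nsym: "neighbors \<Delta>0 \<Delta>r r X' X" if "neighbors \<Delta>0 \<Delta>r r X X'" for X X' :: "'u \<Rightarrow> real"
  proof -
    have "l0_dist X' X = l0_dist X X'" unfolding l0_dist_def by (metis (mono_tags, lifting))
    moreover have "lr_dist r X' X = lr_dist r X X'" unfolding lr_dist_def by (simp add: abs_minus_commute)
    ultimately show ?thesis using that unfolding neighbors_def by auto
  qed
  show ?thesis unfolding is_RDP_def
    using one_dir[OF assms(1-8)] nsym assms(9,10) by blast
qed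

end
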